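(* Let $X,Y\in\mathcal{B}(\mathcal{H})$ and let $f,g$ be nonnegative continuous functions on $[0,\infty)$ satisfying $f(t)g(t)=t$ for all $t\geq 0$. Then for every unit vector $x\in\mathcal{H}$ and all $r,s\geq 1$, $$|\langle Xx,x\rangle|^r+|\langle Yx,x\rangle|^s\leq \frac12\left\|f^{2r}(|X|)+g^{2r}(|X^*|)+f^{2s}(|Y|)+g^{2s}(|Y^*|)\right\|.$$
   Context: $\mathcal{H}$ is a complex Hilbert space, $\mathcal{B}(\mathcal{H})$ the bounded linear operators on it. For $T\in\mathcal{B}(\mathcal{H})$, $|T|=(T^*T)^{1/2}$, and $f(|T|)$ etc. are defined by continuous functional calculus; $f^{2r}(|X|)$ means $(f(|X|))^{2r}$. *)

theory Defs
  imports "HOL-Analysis.Analysis" "HOL-Computational_Algebra.Polynomial"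
begin

class complex_vector = real_vector +
  fixes scaleC :: "complex \<Rightarrow> 'a \<Rightarrow> 'a"
  assumes scaleC_add_right: "scaleC c (x + y) = scaleC c x + scaleC c y"
    and scaleC_add_left: "scaleC (a + b) x = scaleC a x + scaleC b x"
    and scaleC_scaleC: "scaleC a (scaleC b x) = scaleC (a * b) x"
    and scaleC_one: "scaleC 1 x = x"
    and scaleC_of_real: "scaleC (complex_of_real r) x = r *\<^sub>R x"

class complex_inner = complex_vector + real_normed_vector +
  fixes cinner :: "'a \<Rightarrow> 'a \<Rightarrow> complex"
  assumes cinner_cnj: "cinner x y = cnj (cinner y x)"
    and cinner_add_left: "cinner (x + y) z = cinner x z + cinner y z"
    and cinner_scaleC_left: "cinner (scaleC c x) y = c * cinner x y"
    and cinner_self_real: "Im (cinner x x) = 0"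
    and cinner_self_nonneg: "0 \<le> Re (cinner x x)"
    and cinner_self_eq_0: "cinner x x = 0 \<longleftrightarrow> x = 0"
    and norm_cinner: "norm x = sqrt (Re (cinner x x))"

text \<open>A complex Hilbert space is a type of sort {complex_inner, complete_space}.
  Operators in B(H) are represented as functions satisfying cbounded.\<close>

definition cbounded :: "('a::complex_inner \<Rightarrow> 'a) \<Rightarrow> bool" where
  "cbounded T \<longleftrightarrow> (\<forall>x y. T (x + y) = T x + T y) \<and> (\<forall>c x. T (scaleC c x) = scaleC c (T x))
     \<and> (\<exists>K. \<forall>x. norm (T x) \<le> norm x * K)"

definition adj :: "('a::complex_inner \<Rightarrow> 'a) \<Rightarrow> ('a \<Rightarrow> 'a)" where
  "adj T = (\<lambda>y. THE z. \<forall>x. cinner (T x) y = cinner x z)"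

definition opoly :: "real poly \<Rightarrow> ('a::complex_inner \<Rightarrow> 'a) \<Rightarrow> ('a \<Rightarrow> 'a)" where
  "opoly p A = (\<lambda>x. \<Sum>i\<le>degree p. coeff p i *\<^sub>R (A ^^ i) x)"

text \<open>Continuous functional calculus for a positive operator A (spectrum in [0, norm A]):
  f(A) is the operator-norm limit of p_n(A) for every sequence of polynomials p_n
  converging uniformly to f on [0, norm A].\<close>
definition fcalc :: "(real \<Rightarrow> real) \<Rightarrow> ('a::complex_inner \<Rightarrow> 'a) \<Rightarrow> ('a \<Rightarrow> 'a)" where
  "fcalc f A = (THE B. cbounded B \<and>
     (\<forall>ps. uniform_limit {0..onorm A} (\<lambda>n t. poly (ps n) t) f sequentially \<longrightarrow>
        (\<lambda>n. onorm (\<lambda>x. opoly (ps n) A x - B x)) \<longlonglongrightarrow> 0))"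

definition oabs :: "('a::complex_inner \<Rightarrow> 'a) \<Rightarrow> ('a \<Rightarrow> 'a)" where
  "oabs T = fcalc sqrt (adj T \<circ> T)"

end

theory Submission
  imports Defs "HOL-Computational_Algebra.Fundamental_Theorem_Algebra"
begin
lemma cinner_scaleR_left: "cinner (r *\<^sub>R x) y = complex_of_real r * cinner x (y::'a::complex_inner)"
  by (simp add: scaleC_of_real[symmetric] cinner_scaleC_left)

lemma cinner_zero_left[simp]: "cinner 0 (y::'a::complex_inner) = 0"
  using cinner_scaleR_left[of 0 y y] by simp

lemma cinner_add_right: "cinner x (y + z) = cinner x y + cinner x (z::'a::complex_inner)"
proof -
  have "cinner x (y + z) = cnj (cinner (y+z) x)" by (rule cinner_cnj)
  also have "\<dots> = cnj (cinner y x) + cnj (cinner z x)" by (simp add: cinner_add_left)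
  also have "\<dots> = cinner x y + cinner x z" by (simp add: cinner_cnj[of x y] cinner_cnj[of x z])
  finally show ?thesis .
qed

lemma cinner_scaleC_right: "cinner x (scaleC c y) = cnj c * cinner x (y::'a::complex_inner)"
proof -
  have "cinner x (scaleC c y) = cnj (cinner (scaleC c y) x)" by (rule cinner_cnj)
  also have "\<dots> = cnj c * cnj (cinner y x)" by (simp add: cinner_scaleC_left)
  also have "\<dots> = cnj c * cinner x y" by (simp add: cinner_cnj[of x y])
  finally show ?thesis .
qed

lemma cinner_scaleR_right: "cinner x (r *\<^sub>R y) = complex_of_real r * cinner x (y::'a::complex_inner)"
  by (simp add: scaleC_of_real[symmetric] cinner_scaleC_right)

lemma cinner_zero_right[simp]: "cinner x (0::'a::complex_inner) = 0"
  using cinner_scaleR_right[of x 0 x] by simp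

lemma cinner_minus_left: "cinner (- x) y = - cinner x (y::'a::complex_inner)"
  using cinner_scaleR_left[of "-1" x y] by simp

lemma cinner_minus_right: "cinner x (- y) = - cinner x (y::'a::complex_inner)"
  using cinner_scaleR_right[of x "-1" y] by simp

lemma cinner_diff_left: "cinner (x - y) z = cinner x z - cinner y (z::'a::complex_inner)"
  using cinner_add_left[of x "-y" z] by (simp add: cinner_minus_left)

lemma cinner_diff_right: "cinner x (y - z) = cinner x y - cinner x (z::'a::complex_inner)"
  using cinner_add_right[of x y "-z"] by (simp add: cinner_minus_right)

lemma cinner_sum_left: "cinner (\<Sum>i\<in>I. f i) (y::'a::complex_inner) = (\<Sum>i\<in>I. cinner (f i) y)"
  by (induction I rule: infinite_finite_induct) (auto simp: cinner_add_left)

lemma cinner_sum_right: "cinner y (\<Sum>i\<in>I. f i) = (\<Sum>i\<in>I. cinner y (f i::'a::complex_inner))"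
  by (induction I rule: infinite_finite_induct) (auto simp: cinner_add_right)

lemma cinner_self: "cinner x x = complex_of_real ((norm (x::'a::complex_inner))^2)"
proof -
  have "Re (cinner x x) = (norm x)^2" using norm_cinner[of x] cinner_self_nonneg[of x] by simp
  then show ?thesis using cinner_self_real[of x] by (simp add: complex_eq_iff)
qed

lemma Re_cinner_self: "Re (cinner x x) = (norm (x::'a::complex_inner))^2"
  by (simp add: cinner_self)

lemma cinner_eq_zero_all: "(\<And>y. cinner x y = 0) \<Longrightarrow> x = (0::'a::complex_inner)"
  using cinner_self_eq_0 by blast

lemma cinner_ext: "(\<And>z. cinner x z = cinner y z) \<Longrightarrow> x = (y::'a::complex_inner)"
  using cinner_eq_zero_all[of "x - y"] by (simp add: cinner_diff_left)

lemma cinner_ext_right: "(\<And>z. cinner z x = cinner z y) \<Longrightarrow> x = (y::'a::complex_inner)"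
proof (rule cinner_ext)
  fix z assume "\<And>z. cinner z x = cinner z y"
  then have "cnj (cinner z x) = cnj (cinner z y)" by simp
  then show "cinner x z = cinner y z" by (simp add: cinner_cnj[of x z] cinner_cnj[of y z])
qed

lemma cauchy_schwarz: "cmod (cinner x y) \<le> norm x * norm (y::'a::complex_inner)"
proof (cases "y = 0")
  case True then show ?thesis by simp
next
  case False
  define a where "a = cinner x y"
  define n where "n = (norm y)^2"
  define t where "t = a / complex_of_real n"
  have ny: "n > 0" using False by (simp add: n_def)
  have yx: "cinner y x = cnj a" by (simp add: a_def cinner_cnj[of y x])
  have yy: "cinner y y = complex_of_real n" by (simp add: n_def cinner_self)
  have "0 \<le> Re (cinner (x - scaleC t y) (x - scaleC t y))"
    by (rule cinner_self_nonneg)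
  also have "cinner (x - scaleC t y) (x - scaleC t y)
      = cinner x x - cnj t * a - t * cnj a + t * cnj t * complex_of_real n"
    by (simp add: cinner_diff_left cinner_diff_right cinner_scaleC_left cinner_scaleC_right
        yx yy a_def algebra_simps)
  also have "t * cnj t * complex_of_real n = a * cnj a / complex_of_real n"
    using ny by (simp add: t_def field_simps)
  also have "cnj t * a = a * cnj a / complex_of_real n"
    using ny by (simp add: t_def field_simps)
  also have "t * cnj a = a * cnj a / complex_of_real n"
    using ny by (simp add: t_def field_simps)
  also have "a * cnj a = complex_of_real ((cmod a)^2)"
    by (metis complex_norm_square)
  finally have "0 \<le> (norm x)^2 - (cmod a)^2 / n"
    using ny by (simp add: cinner_self Re_divide power2_eq_square)
  then have "(cmod a)^2 / n \<le> (norm x)^2" by simp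
  then have "(cmod a)^2 \<le> (norm x)^2 * n"
    using ny by (simp add: pos_divide_le_eq)
  then have "(cmod a)^2 \<le> (norm x * norm y)^2"
    by (simp add: n_def power_mult_distrib)
  then show ?thesis unfolding a_def
    by (meson mult_nonneg_nonneg norm_ge_zero power2_le_imp_le)
qed

lemma norm_add_sq: "(norm (x + y))^2 = (norm x)^2 + (norm y)^2 + 2 * Re (cinner x (y::'a::complex_inner))"
proof -
  have "cinner (x+y) (x+y) = cinner x x + cinner x y + cinner y x + cinner y y"
    by (simp add: cinner_add_left cinner_add_right)
  then have "(norm (x+y))^2 = Re (cinner x x + cinner x y + cinner y x + cinner y y)"
    by (metis Re_cinner_self)
  then show ?thesis by (simp add: Re_cinner_self cinner_cnj[of y x])
qed

lemma cbounded_add: "cbounded T \<Longrightarrow> T (x + y) = T x + T y"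
  by (simp add: cbounded_def)
lemma cbounded_scaleC: "cbounded T \<Longrightarrow> T (scaleC c x) = scaleC c (T x)"
  by (simp add: cbounded_def)
lemma cbounded_scaleR: "cbounded T \<Longrightarrow> T (r *\<^sub>R x) = r *\<^sub>R (T x)"
  by (metis cbounded_scaleC scaleC_of_real)

lemma cbounded_bounded_linear: "cbounded T \<Longrightarrow> bounded_linear T"
  unfolding cbounded_def
  by (auto intro!: bounded_linear_intro simp: scaleC_of_real[symmetric])

lemma cbounded_zero: "cbounded T \<Longrightarrow> T 0 = 0"
  using cbounded_bounded_linear linear_simps(3) by blast
lemma cbounded_minus: "cbounded T \<Longrightarrow> T (- x) = - T x"
  using cbounded_bounded_linear linear_simps(4) by blast
lemma cbounded_diff: "cbounded T \<Longrightarrow> T (x - y) = T x - T y"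
  using cbounded_bounded_linear linear_simps(2) by blast
lemma cbounded_sum: "cbounded T \<Longrightarrow> T (\<Sum>i\<in>I. f i) = (\<Sum>i\<in>I. T (f i))"
  using cbounded_bounded_linear bounded_linear.linear linear_sum by blast

lemma cbounded_onorm: "cbounded T \<Longrightarrow> norm (T x) \<le> onorm T * norm x"
  using cbounded_bounded_linear onorm by blast
lemma cbounded_onorm_nonneg: "cbounded T \<Longrightarrow> 0 \<le> onorm T"
  using cbounded_bounded_linear onorm_pos_le by blast

lemma cboundedI:
  assumes "\<And>x y. T (x + y) = T x + T y" "\<And>c x. T (scaleC c x) = scaleC c (T x)"
    "\<And>x. norm (T x) \<le> norm x * K"
  shows "cbounded T"
  using assms unfolding cbounded_def by blast

lemma cbounded_id: "cbounded (\<lambda>x. x)"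
  by (rule cboundedI[where K=1]) auto

lemma cbounded_comp: "cbounded S \<Longrightarrow> cbounded T \<Longrightarrow> cbounded (\<lambda>x. S (T x))"
proof -
  assume S: "cbounded S" and T: "cbounded T"
  show ?thesis
  proof (rule cboundedI[where K="onorm T * onorm S"])
    fix x
    have "norm (S (T x)) \<le> onorm S * norm (T x)" by (rule cbounded_onorm[OF S])
    also have "\<dots> \<le> onorm S * (onorm T * norm x)"
      by (rule mult_left_mono[OF cbounded_onorm[OF T] cbounded_onorm_nonneg[OF S]])
    finally show "norm (S (T x)) \<le> norm x * (onorm T * onorm S)" by (simp add: ac_simps)
  qed (simp_all add: cbounded_add[OF S] cbounded_add[OF T] cbounded_scaleC[OF S] cbounded_scaleC[OF T])
qed

lemma cbounded_comp': "cbounded S \<Longrightarrow> cbounded T \<Longrightarrow> cbounded (S \<circ> T)"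
  using cbounded_comp[of S T] by (simp add: comp_def)

lemma cbounded_plus: "cbounded S \<Longrightarrow> cbounded T \<Longrightarrow> cbounded (\<lambda>x. S x + T x)"
proof -
  assume S: "cbounded S" and T: "cbounded T"
  show ?thesis
  proof (rule cboundedI[where K="onorm S + onorm T"])
    fix x
    have "norm (S x + T x) \<le> norm (S x) + norm (T x)" by (rule norm_triangle_ineq)
    also have "\<dots> \<le> onorm S * norm x + onorm T * norm x"
      using cbounded_onorm[OF S] cbounded_onorm[OF T] by (rule add_mono)
    finally show "norm (S x + T x) \<le> norm x * (onorm S + onorm T)" by (simp add: algebra_simps)
  qed (simp_all add: cbounded_add[OF S] cbounded_add[OF T] cbounded_scaleC[OF S] cbounded_scaleC[OF T]
        scaleC_add_right)
qed

lemma scaleC_scaleR_commute: "scaleC c (r *\<^sub>R x) = r *\<^sub>R scaleC c (x::'a::complex_vector)"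
  by (metis scaleC_of_real scaleC_scaleC mult.commute)

lemma scaleC_zero_right[simp]: "scaleC c (0::'a::complex_vector) = 0"
  using scaleC_scaleR_commute[of c 0 0] by simp

lemma cbounded_scaleR_op: "cbounded T \<Longrightarrow> cbounded (\<lambda>x. r *\<^sub>R T x)"
proof -
  assume T: "cbounded T"
  show ?thesis
  proof (rule cboundedI[where K="\<bar>r\<bar> * onorm T"])
    fix x
    show "norm (r *\<^sub>R T x) \<le> norm x * (\<bar>r\<bar> * onorm T)"
      using mult_left_mono[OF cbounded_onorm[OF T, of x], of "\<bar>r\<bar>"] by (simp add: ac_simps)
  qed (simp_all add: cbounded_add[OF T] cbounded_scaleC[OF T] scaleR_add_right scaleC_scaleR_commute)
qed

lemma cbounded_minus_op: "cbounded S \<Longrightarrow> cbounded T \<Longrightarrow> cbounded (\<lambda>x. S x - T x)"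
  using cbounded_plus[of S "\<lambda>x. (-1) *\<^sub>R T x"] cbounded_scaleR_op[of T "-1"] by simp

lemma cbounded_const0: "cbounded (\<lambda>x. 0)"
  by (rule cboundedI[where K=0]) (auto simp: scaleC_of_real[of 0, simplified, symmetric])

section \<open>Riesz representation\<close>

lemma parallelogram: "(norm (u + v))^2 + (norm (u - v))^2 = 2 * (norm u)^2 + 2 * (norm (v::'a::complex_inner))^2"
proof -
  have "(norm (u - v))^2 = (norm u)^2 + (norm v)^2 - 2 * Re (cinner u v)"
    using norm_add_sq[of u "-v"] by (simp add: cinner_minus_right)
  then show ?thesis using norm_add_sq[of u v] by simp
qed

lemma riesz:
  fixes \<phi> :: "'a::{complex_inner,complete_space} \<Rightarrow> complex"
  assumes add: "\<And>x y. \<phi> (x + y) = \<phi> x + \<phi> y"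
    and sc: "\<And>c x. \<phi> (scaleC c x) = c * \<phi> x"
    and bd: "\<And>x. cmod (\<phi> x) \<le> norm x * K"
  shows "\<exists>z. \<forall>x. \<phi> x = cinner x z"
proof (cases "\<forall>x. \<phi> x = 0")
  case True then show ?thesis by (intro exI[of _ 0]) simp
next
  case False
  then obtain w where w: "\<phi> w \<noteq> 0" by blast
  have phi_sR: "\<phi> (r *\<^sub>R x) = complex_of_real r * \<phi> x" for r x
    by (metis sc scaleC_of_real)
  have phi_diff: "\<phi> (x - y) = \<phi> x - \<phi> y" for x y
    using add[of "x - y" y] by simp
  define S where "S = {x. \<phi> x = 1}"
  have wS: "scaleC (1 / \<phi> w) w \<in> S" using w by (simp add: S_def sc)
  define d where "d = Inf (norm ` S)"
  have bdd: "bdd_below (norm ` S)" by (rule bdd_belowI[of _ 0]) auto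
  have d_le: "d \<le> norm v" if "v \<in> S" for v
    unfolding d_def using bdd that by (simp add: cInf_lower)
  have d0: "0 \<le> d" unfolding d_def using wS by (intro cInf_greatest) auto
  have "\<exists>x\<in>S. norm x < d + 1 / (real n + 1)" for n
  proof -
    have "Inf (norm ` S) < d + 1 / (real n + 1)" unfolding d_def by simp
    then obtain y where "y \<in> norm ` S" "y < d + 1 / (real n + 1)"
      using cInf_lessD[of "norm ` S"] wS by blast
    then show ?thesis by blast
  qed
  then obtain xs where xsS: "\<And>n. xs n \<in> S" and xsn: "\<And>n. norm (xs n) < d + 1 / (real n + 1)"
    by metis
  have mid: "(1/2) *\<^sub>R (u + v) \<in> S" if "u \<in> S" "v \<in> S" for u v
    using that by (simp add: S_def phi_sR add)
  have par: "(norm (u - v))^2 \<le> 2 * (norm u)^2 + 2 * (norm v)^2 - 4 * d^2" if "u \<in> S" "v \<in> S" for u v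
  proof -
    have "d \<le> norm ((1/2) *\<^sub>R (u + v))" by (rule d_le[OF mid[OF that]])
    then have "2 * d \<le> norm (u + v)" by simp
    then have "(2 * d)^2 \<le> (norm (u + v))^2"
      using d0 by (intro power_mono) auto
    then have "4 * d^2 \<le> (norm (u + v))^2" by (simp add: power_mult_distrib)
    then show ?thesis using parallelogram[of u v] by linarith
  qed
  have Cau: "Cauchy xs"
  proof (rule metric_CauchyI)
    fix e :: real assume e: "0 < e"
    define \<delta> where "\<delta> = min 1 (e^2 / (8 * d + 5))"
    have \<delta>0: "0 < \<delta>" using e d0 by (simp add: \<delta>_def)
    obtain M :: nat where M0: "inverse (real (Suc M)) < \<delta>"
      using reals_Archimedean[OF \<delta>0] by blast
    then have M: "1 / (real M + 1) < \<delta>" by (simp add: inverse_eq_divide add.commute)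
    have small: "1 / (real n + 1) < \<delta>" if "n \<ge> M" for n
    proof -
      have "1 / (real n + 1) \<le> 1 / (real M + 1)" using that by (simp add: frac_le)
      then show ?thesis using M by linarith
    qed
    show "\<exists>M. \<forall>m\<ge>M. \<forall>n\<ge>M. dist (xs m) (xs n) < e"
    proof (intro exI allI impI)
      fix m n assume m: "m \<ge> M" and n: "n \<ge> M"
      have nm: "norm (xs m) < d + \<delta>" "norm (xs n) < d + \<delta>"
        using xsn[of m] xsn[of n] small[OF m] small[OF n] by linarith+
      have sq: "(norm (xs m))^2 \<le> (d + \<delta>)^2" "(norm (xs n))^2 \<le> (d + \<delta>)^2"
        using nm by (auto intro!: power_mono)
      have "(norm (xs m - xs n))^2 \<le> 2 * (d + \<delta>)^2 + 2 * (d + \<delta>)^2 - 4 * d^2"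
        using par[OF xsS xsS, of m n] sq by linarith
      also have "\<dots> = 8 * d * \<delta> + 4 * \<delta> * \<delta>" by (simp add: power2_eq_square algebra_simps)
      also have "\<dots> \<le> 8 * d * \<delta> + 4 * \<delta>"
      proof -
        have "\<delta> \<le> 1" by (simp add: \<delta>_def)
        then show ?thesis using mult_left_mono[OF \<open>\<delta> \<le> 1\<close>, of "4*\<delta>"] \<delta>0 by simp
      qed
      also have "\<dots> = (8 * d + 4) * \<delta>" by (simp add: algebra_simps)
      also have "\<dots> < e^2"
      proof -
        have "(8 * d + 4) * \<delta> \<le> (8 * d + 4) * (e^2 / (8 * d + 5))"
          using d0 by (intro mult_left_mono) (auto simp: \<delta>_def)
        also have "\<dots> < e^2" using d0 e by (simp add: field_simps)
        finally show ?thesis .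
      qed
      finally have "(norm (xs m - xs n))^2 < e^2" .
      then show "dist (xs m) (xs n) < e"
        using e by (simp add: dist_norm power_less_imp_less_base)
    qed
  qed
  then obtain z0 where lim: "xs \<longlonglongrightarrow> z0" using Cauchy_convergent_iff convergent_def by blast
  have phi_cont: "(\<lambda>n. \<phi> (xs n)) \<longlonglongrightarrow> \<phi> z0"
  proof -
    have bl: "bounded_linear \<phi>"
      by (rule bounded_linear_intro[of _ K]) (auto simp: add phi_sR bd scaleR_conv_of_real)
    show ?thesis by (rule bounded_linear.tendsto[OF bl lim])
  qed
  then have "\<phi> z0 = 1" using xsS by (simp add: S_def LIMSEQ_const_iff)
  then have z0S: "z0 \<in> S" by (simp add: S_def)
  have "norm z0 \<le> d"
  proof (rule LIMSEQ_le[OF tendsto_norm[OF lim]])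
    show "(\<lambda>n. d + 1 / (real n + 1)) \<longlonglongrightarrow> d"
      using tendsto_add[OF tendsto_const LIMSEQ_inverse_real_of_nat] by (simp add: inverse_eq_divide add.commute)
    show "\<exists>N. \<forall>n\<ge>N. norm (xs n) \<le> d + 1 / (real n + 1)" using xsn less_imp_le by blast
  qed
  then have z0min: "norm z0 \<le> norm v" if "v \<in> S" for v using d_le[OF that] by linarith
  have orth: "cinner z0 n = 0" if "\<phi> n = 0" for n
  proof -
    define b where "b = cinner z0 n"
    define \<epsilon> where "\<epsilon> = 1 / ((norm n)^2 + 1)"
    have np: "0 < (norm n)^2 + 1" using zero_le_power2[of "norm n"] by linarith
    have e0: "0 < \<epsilon>" using np by (simp add: \<epsilon>_def)
    define t where "t = - complex_of_real \<epsilon> * b"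
    have "z0 + scaleC t n \<in> S" using z0S that by (simp add: S_def add sc)
    then have "(norm z0)^2 \<le> (norm (z0 + scaleC t n))^2"
      using z0min by (simp add: power_mono)
    also have "\<dots> = (norm z0)^2 + (norm (scaleC t n))^2 + 2 * Re (cinner z0 (scaleC t n))"
      by (rule norm_add_sq)
    also have "(norm (scaleC t n))^2 = (cmod t)^2 * (norm n)^2"
    proof -
      have "complex_of_real ((norm (scaleC t n))^2) = cinner (scaleC t n) (scaleC t n)"
        by (simp only: cinner_self)
      also have "\<dots> = t * cnj t * cinner n n"
        by (simp add: cinner_scaleC_left cinner_scaleC_right)
      also have "\<dots> = complex_of_real ((cmod t)^2) * complex_of_real ((norm n)^2)"
        by (metis complex_norm_square cinner_self)
      also have "\<dots> = complex_of_real ((cmod t)^2 * (norm n)^2)" by simp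
      finally show ?thesis using of_real_eq_iff by blast
    qed
    also have "Re (cinner z0 (scaleC t n)) = - \<epsilon> * (cmod b)^2"
    proof -
      have "cinner z0 (scaleC t n) = - complex_of_real \<epsilon> * (cnj b * b)"
        by (simp add: cinner_scaleC_right t_def b_def)
      also have "cnj b * b = complex_of_real ((cmod b)^2)" by (metis complex_norm_square mult.commute)
      finally show ?thesis by simp
    qed
    also have "(cmod t)^2 = \<epsilon>^2 * (cmod b)^2"
      using e0 by (simp add: t_def norm_mult power_mult_distrib)
    finally have "0 \<le> \<epsilon>^2 * (cmod b)^2 * (norm n)^2 - 2 * \<epsilon> * (cmod b)^2" by simp
    then have "0 \<le> \<epsilon> * (cmod b)^2 * (\<epsilon> * (norm n)^2 - 2)"
      by (simp add: power2_eq_square algebra_simps)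
    moreover have "\<epsilon> * (norm n)^2 < 1"
      using np by (simp add: \<epsilon>_def divide_less_eq)
    ultimately have "\<epsilon> * (cmod b)^2 \<le> 0"
      using zero_le_mult_iff[of "\<epsilon> * (cmod b)^2" "\<epsilon> * (norm n)^2 - 2"] by linarith
    then have "(cmod b)^2 \<le> 0" using e0 by (simp add: mult_le_0_iff)
    then show ?thesis unfolding b_def by simp
  qed
  have z0nz: "z0 \<noteq> 0" using \<open>\<phi> z0 = 1\<close> phi_sR[of 0 z0] by auto
  define z where "z = scaleC (complex_of_real (1 / (norm z0)^2)) z0"
  show ?thesis
  proof (intro exI allI)
    fix x
    have "\<phi> (x - scaleC (\<phi> x) z0) = 0" using \<open>\<phi> z0 = 1\<close> by (simp add: phi_diff sc)
    then have "cinner z0 (x - scaleC (\<phi> x) z0) = 0" by (rule orth)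
    then have "cinner (x - scaleC (\<phi> x) z0) z0 = 0" by (metis cinner_cnj complex_cnj_zero)
    then have "cinner x z0 = \<phi> x * complex_of_real ((norm z0)^2)"
      by (simp add: cinner_diff_left cinner_scaleC_left cinner_self)
    then show "\<phi> x = cinner x z"
      using z0nz by (simp add: z_def cinner_scaleC_right field_simps)
  qed
qed

section \<open>Adjoint\<close>

lemma adj_ex1:
  assumes T: "cbounded (T::'a::{complex_inner,complete_space} \<Rightarrow> 'a)"
  shows "\<exists>!z. \<forall>x. cinner (T x) y = cinner x z"
proof (rule ex_ex1I)
  obtain K where K: "\<And>x. norm (T x) \<le> norm x * K" using T unfolding cbounded_def by blast
  show "\<exists>z. \<forall>x. cinner (T x) y = cinner x z"
  proof (rule riesz[where K="K * norm y"])
    fix x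
    have "cmod (cinner (T x) y) \<le> norm (T x) * norm y" by (rule cauchy_schwarz)
    also have "\<dots> \<le> norm x * K * norm y" by (rule mult_right_mono[OF K]) simp
    finally show "cmod (cinner (T x) y) \<le> norm x * (K * norm y)" by (simp add: ac_simps)
  qed (simp_all add: cbounded_add[OF T] cbounded_scaleC[OF T] cinner_add_left cinner_scaleC_left)
next
  fix z1 z2 assume "\<forall>x. cinner (T x) y = cinner x z1" "\<forall>x. cinner (T x) y = cinner x z2"
  then show "z1 = z2" by (intro cinner_ext_right) auto
qed

lemma adj_prop:
  assumes "cbounded (T::'a::{complex_inner,complete_space} \<Rightarrow> 'a)"
  shows "cinner (T x) y = cinner x (adj T y)"
proof -
  have "\<forall>x. cinner (T x) y = cinner x (adj T y)"
    unfolding adj_def by (rule theI'[OF adj_ex1[OF assms]])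
  then show ?thesis by blast
qed

lemma adj_prop2:
  assumes "cbounded (T::'a::{complex_inner,complete_space} \<Rightarrow> 'a)"
  shows "cinner (adj T y) x = cinner y (T x)"
  using adj_prop[OF assms, of x y] by (metis cinner_cnj)

lemma adj_cbounded:
  assumes T: "cbounded (T::'a::{complex_inner,complete_space} \<Rightarrow> 'a)"
  shows "cbounded (adj T)"
proof (rule cboundedI[where K="onorm T"])
  fix x y
  show "adj T (x + y) = adj T x + adj T y"
    by (rule cinner_ext_right) (simp add: adj_prop[OF T, symmetric] cinner_add_right)
next
  fix c x
  show "adj T (scaleC c x) = scaleC c (adj T x)"
    by (rule cinner_ext_right) (simp add: adj_prop[OF T, symmetric] cinner_scaleC_right)
next
  fix y
  have "(norm (adj T y))^2 = Re (cinner (adj T y) (adj T y))" by (simp add: Re_cinner_self)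
  also have "\<dots> = Re (cinner (T (adj T y)) y)" by (simp add: adj_prop[OF T])
  also have "\<dots> \<le> cmod (cinner (T (adj T y)) y)" by (rule complex_Re_le_cmod)
  also have "\<dots> \<le> norm (T (adj T y)) * norm y" by (rule cauchy_schwarz)
  also have "\<dots> \<le> onorm T * norm (adj T y) * norm y"
    by (rule mult_right_mono[OF cbounded_onorm[OF T]]) simp
  finally have "norm (adj T y) * norm (adj T y) \<le> norm (adj T y) * (norm y * onorm T)"
    by (simp add: power2_eq_square ac_simps)
  then show "norm (adj T y) \<le> norm y * onorm T"
    using cbounded_onorm_nonneg[OF T]
    by (cases "norm (adj T y) = 0") (auto simp: mult_le_cancel_left_pos)
qed

lemma adj_adj:
  assumes T: "cbounded (T::'a::{complex_inner,complete_space} \<Rightarrow> 'a)"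
  shows "adj (adj T) = T"
proof
  fix y
  show "adj (adj T) y = T y"
    by (rule cinner_ext_right) (simp add: adj_prop[OF adj_cbounded[OF T], symmetric] adj_prop2[OF T])
qed

lemma mult_cnj_sq: "z * cnj z = (complex_of_real (cmod z))^2"
  by (metis complex_norm_square of_real_power)
lemma cnj_mult_sq: "cnj z * z = (complex_of_real (cmod z))^2"
  by (metis complex_norm_square of_real_power mult.commute)

definition sa :: "('a::complex_inner \<Rightarrow> 'a) \<Rightarrow> bool" where
  "sa T \<longleftrightarrow> (\<forall>x y. cinner (T x) y = cinner x (T y))"

definition posop :: "('a::complex_inner \<Rightarrow> 'a) \<Rightarrow> bool" where
  "posop T \<longleftrightarrow> cbounded T \<and> sa T \<and> (\<forall>x. 0 \<le> Re (cinner (T x) x))"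

lemma sa_real: "sa T \<Longrightarrow> cinner (T x) x = complex_of_real (Re (cinner (T x) x))"
proof -
  assume "sa T"
  then have "cinner (T x) x = cinner x (T x)" by (simp add: sa_def)
  also have "\<dots> = cnj (cinner (T x) x)" by (rule cinner_cnj)
  finally have "Im (cinner (T x) x) = Im (cnj (cinner (T x) x))" by simp
  then have "Im (cinner (T x) x) = 0" by simp
  then show ?thesis by (simp add: complex_eq_iff)
qed

lemma posop_AtA:
  assumes X: "cbounded (X::'a::{complex_inner,complete_space} \<Rightarrow> 'a)"
  shows "posop (adj X \<circ> X)"
  unfolding posop_def sa_def
proof (intro conjI allI)
  show "cbounded (adj X \<circ> X)" by (rule cbounded_comp'[OF adj_cbounded[OF X] X])
  fix x y
  show "cinner ((adj X \<circ> X) x) y = cinner x ((adj X \<circ> X) y)"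
    by (simp add: adj_prop2[OF X] adj_prop[OF X, symmetric])
next
  fix x
  show "0 \<le> Re (cinner ((adj X \<circ> X) x) x)"
    by (simp add: adj_prop2[OF X] Re_cinner_self)
qed

lemma quad_complex:
  fixes a d :: real and b :: complex
  assumes d: "0 \<le> d" and Q: "\<And>t. 0 \<le> a + 2 * Re (cnj t * b) + (cmod t)^2 * d"
  shows "(cmod b)^2 \<le> a * d"
proof (cases "d = 0")
  case False
  then have d0: "d > 0" using d by simp
  have "0 \<le> a + 2 * Re (cnj (- b / complex_of_real d) * b) + (cmod (- b / complex_of_real d))^2 * d"
    by (rule Q)
  also have "cnj (- b / complex_of_real d) * b = - complex_of_real ((cmod b)^2 / d)"
    by (simp add: mult_cnj_sq cnj_mult_sq)
  also have "(cmod (- b / complex_of_real d))^2 * d = (cmod b)^2 / d"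
    using d0 by (simp add: norm_divide power_divide power2_eq_square)
  finally have "0 \<le> a - (cmod b)^2 / d" by simp
  then show ?thesis using d0 by (simp add: field_simps)
next
  case True
  show ?thesis
  proof (cases "b = 0")
    case False
    define s where "s = (\<bar>a\<bar> + 1) / (2 * (cmod b)^2)"
    have "0 \<le> a + 2 * Re (cnj (- complex_of_real s * b) * b) + (cmod (- complex_of_real s * b))^2 * d"
      by (rule Q)
    also have "cnj (- complex_of_real s * b) * b = - complex_of_real (s * (cmod b)^2)"
      by (simp add: mult_cnj_sq cnj_mult_sq)
    finally have "0 \<le> a - 2 * s * (cmod b)^2" using True by simp
    also have "2 * s * (cmod b)^2 = \<bar>a\<bar> + 1" using False by (simp add: s_def)
    finally show ?thesis by linarith
  qed (simp add: True)
qed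

lemma posop_cs:
  assumes P: "posop P"
  shows "(cmod (cinner (P u) v))^2 \<le> Re (cinner (P u) u) * Re (cinner (P v) v)"
proof (rule quad_complex)
  have cb: "cbounded P" and sa: "sa P" and pos: "\<And>x. 0 \<le> Re (cinner (P x) x)"
    using P by (auto simp: posop_def)
  show "0 \<le> Re (cinner (P v) v)" by (rule pos)
  fix t
  have vu: "cinner (P v) u = cnj (cinner (P u) v)"
    using sa by (simp add: sa_def cinner_cnj[of u "P v"])
  have "0 \<le> Re (cinner (P (u + scaleC t v)) (u + scaleC t v))" by (rule pos)
  also have "cinner (P (u + scaleC t v)) (u + scaleC t v)
     = cinner (P u) u + cnj t * cinner (P u) v + t * cnj (cinner (P u) v) + t * cnj t * cinner (P v) v"
    by (simp add: cbounded_add[OF cb] cbounded_scaleC[OF cb] cinner_add_left cinner_add_right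
        cinner_scaleC_left cinner_scaleC_right vu algebra_simps)
  also have "t * cnj t = complex_of_real ((cmod t)^2)" by (metis complex_norm_square)
  finally show "0 \<le> Re (cinner (P u) u) + 2 * Re (cnj t * cinner (P u) v) + (cmod t)^2 * Re (cinner (P v) v)"
    by simp
qed

lemma Re_le_onorm:
  assumes "cbounded T"
  shows "Re (cinner (T x) x) \<le> onorm T * (norm x)^2"
proof -
  have "Re (cinner (T x) x) \<le> cmod (cinner (T x) x)" by (rule complex_Re_le_cmod)
  also have "\<dots> \<le> norm (T x) * norm x" by (rule cauchy_schwarz)
  also have "\<dots> \<le> onorm T * norm x * norm x"
    by (rule mult_right_mono[OF cbounded_onorm[OF assms]]) simp
  finally show ?thesis by (simp add: power2_eq_square ac_simps)
qed

lemma posop_sq_le: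
  assumes P: "posop A" and c: "onorm A \<le> c"
  shows "(norm (A y))^2 \<le> c * Re (cinner (A y) y)"
proof -
  have cb: "cbounded A" using P by (simp add: posop_def)
  have c0: "0 \<le> c" using cbounded_onorm_nonneg[OF cb] c by linarith
  have r0: "0 \<le> Re (cinner (A y) y)" using P by (simp add: posop_def)
  have "(cmod (cinner (A y) (A y)))^2 \<le> Re (cinner (A y) y) * Re (cinner (A (A y)) (A y))"
    by (rule posop_cs[OF P])
  also have "Re (cinner (A (A y)) (A y)) \<le> c * (norm (A y))^2"
    using Re_le_onorm[OF cb, of "A y"] mult_right_mono[OF c, of "(norm (A y))^2"] by simp
  then have "Re (cinner (A y) y) * Re (cinner (A (A y)) (A y)) \<le> Re (cinner (A y) y) * (c * (norm (A y))^2)"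
    using r0 by (rule mult_left_mono)
  also have "cmod (cinner (A y) (A y)) = (norm (A y))^2"
    by (simp add: cinner_self norm_power)
  finally have *: "(norm (A y))^2 * (norm (A y))^2 \<le> (c * Re (cinner (A y) y)) * (norm (A y))^2"
    by (simp add: power2_eq_square[of "(norm (A y))^2"] ac_simps)
  show ?thesis
  proof (cases "norm (A y) = 0")
    case True then show ?thesis using c0 r0 by simp
  next
    case False
    then have p: "0 < (norm (A y))^2" by simp
    show ?thesis using mult_le_cancel_right_pos[OF p] * by blast
  qed
qed

lemma funpow_cbounded: "cbounded A \<Longrightarrow> cbounded (A ^^ i)"
proof (induction i)
  case 0 then show ?case using cbounded_id by (simp add: id_def)
next
  case (Suc i)
  then have "cbounded (A \<circ> A^^i)" by (intro cbounded_comp') auto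
  then show ?case by (simp only: funpow.simps(2))
qed

lemma opoly_upto:
  assumes "degree p \<le> n"
  shows "opoly p A x = (\<Sum>i\<le>n. coeff p i *\<^sub>R (A ^^ i) x)"
proof -
  have "(\<Sum>i\<le>n. coeff p i *\<^sub>R (A ^^ i) x) = (\<Sum>i\<le>degree p. coeff p i *\<^sub>R (A ^^ i) x)"
    using assms by (intro sum.mono_neutral_right) (auto simp: coeff_eq_0)
  then show ?thesis by (simp add: opoly_def)
qed

lemma opoly_0[simp]: "opoly 0 A x = 0"
  by (simp add: opoly_def)

lemma opoly_pCons:
  assumes A: "cbounded A"
  shows "opoly (pCons a p) A x = a *\<^sub>R x + A (opoly p A x)"
proof -
  have "opoly (pCons a p) A x = (\<Sum>i\<le>Suc (degree p). coeff (pCons a p) i *\<^sub>R (A ^^ i) x)"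
    by (rule opoly_upto) (simp add: degree_pCons_le)
  also have "\<dots> = a *\<^sub>R x + (\<Sum>i\<le>degree p. coeff p i *\<^sub>R (A ^^ Suc i) x)"
    unfolding sum.atMost_Suc_shift by simp
  also have "(\<Sum>i\<le>degree p. coeff p i *\<^sub>R (A ^^ Suc i) x) = A (opoly p A x)"
    by (simp add: opoly_def cbounded_sum[OF A] cbounded_scaleR[OF A])
  finally show ?thesis .
qed

lemma opoly_add: "opoly (p + q) A x = opoly p A x + opoly q A x"
proof -
  let ?n = "max (degree p) (degree q)"
  have "opoly (p + q) A x = (\<Sum>i\<le>?n. coeff (p + q) i *\<^sub>R (A ^^ i) x)"
    by (rule opoly_upto) (simp add: degree_add_le)
  also have "\<dots> = (\<Sum>i\<le>?n. coeff p i *\<^sub>R (A ^^ i) x) + (\<Sum>i\<le>?n. coeff q i *\<^sub>R (A ^^ i) x)"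
    by (simp add: scaleR_add_left sum.distrib)
  also have "\<dots> = opoly p A x + opoly q A x"
    using opoly_upto[of p ?n A x] opoly_upto[of q ?n A x] by simp
  finally show ?thesis .
qed

lemma opoly_smult: "opoly (smult a p) A x = a *\<^sub>R opoly p A x"
proof -
  have "opoly (smult a p) A x = (\<Sum>i\<le>degree p. coeff (smult a p) i *\<^sub>R (A ^^ i) x)"
    by (rule opoly_upto) (simp add: degree_smult_le)
  also have "\<dots> = a *\<^sub>R opoly p A x"
    by (simp add: opoly_def scaleR_sum_right)
  finally show ?thesis .
qed

lemma opoly_minus: "opoly (- p) A x = - opoly p A x"
  using opoly_smult[of "-1" p A x] by simp

lemma opoly_diff: "opoly (p - q) A x = opoly p A x - opoly q A x"
  using opoly_add[of p "-q" A x] opoly_minus[of q A x] by simp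

lemma opoly_const: "opoly [:c:] A x = c *\<^sub>R x"
  by (simp add: opoly_def)

lemma opoly_one: "opoly 1 A x = x"
  using opoly_const[of 1 A x] by (simp add: one_pCons)

lemma opoly_X: "cbounded A \<Longrightarrow> opoly [:0, 1:] A x = A x"
  by (simp add: opoly_pCons opoly_const)

lemma opoly_cbounded: "cbounded A \<Longrightarrow> cbounded (opoly p A)"
proof (induction p rule: pCons_induct)
  case 0
  have "opoly 0 A = (\<lambda>x. 0)" by (simp add: fun_eq_iff)
  then show ?case using cbounded_const0 by simp
next
  case (pCons a p)
  have "cbounded (\<lambda>x. A (opoly p A x))" by (rule cbounded_comp[OF pCons.prems pCons.IH[OF pCons.prems]])
  moreover have "cbounded (\<lambda>x. a *\<^sub>R x)" using cbounded_scaleR_op[OF cbounded_id, of a] by simp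
  ultimately have "cbounded (\<lambda>x. a *\<^sub>R x + A (opoly p A x))"
    by (rule cbounded_plus[rotated])
  then show ?case by (simp add: opoly_pCons[OF pCons.prems] fun_eq_iff)
qed

lemma opoly_mult:
  assumes A: "cbounded A"
  shows "opoly (p * q) A x = opoly p A (opoly q A x)"
proof (induction p arbitrary: x rule: pCons_induct)
  case 0 then show ?case by simp
next
  case (pCons a p)
  have "opoly (pCons a p * q) A x = opoly (smult a q + pCons 0 (p * q)) A x" by (simp only: mult_pCons_left)
  also have "\<dots> = a *\<^sub>R opoly q A x + A (opoly p A (opoly q A x))"
    by (simp add: opoly_add opoly_smult opoly_pCons[OF A] pCons.IH)
  also have "\<dots> = opoly (pCons a p) A (opoly q A x)" by (simp add: opoly_pCons[OF A])
  finally show ?case .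
qed

lemma opoly_commute:
  assumes A: "cbounded A"
  shows "opoly p A (A x) = A (opoly p A x)"
proof -
  have "opoly (p * [:0,1:]) A x = opoly ([:0,1:] * p) A x" by (simp add: mult.commute)
  then show ?thesis by (simp only: opoly_mult[OF A] opoly_X[OF A])
qed

lemma opoly_sa:
  assumes A: "cbounded A" and sa: "sa A"
  shows "sa (opoly p A)"
proof (induction p rule: pCons_induct)
  case 0 then show ?case by (simp add: sa_def)
next
  case (pCons a p)
  show ?case unfolding sa_def
  proof (intro allI)
    fix x y
    have "cinner (opoly (pCons a p) A x) y = complex_of_real a * cinner x y + cinner (A (opoly p A x)) y"
      by (simp add: opoly_pCons[OF A] cinner_add_left cinner_scaleR_left)
    also have "cinner (A (opoly p A x)) y = cinner x (opoly p A (A y))"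
      using sa pCons.IH by (simp add: sa_def)
    also have "opoly p A (A y) = A (opoly p A y)" by (rule opoly_commute[OF A])
    finally show "cinner (opoly (pCons a p) A x) y = cinner x (opoly (pCons a p) A y)"
      by (simp add: opoly_pCons[OF A] cinner_add_right cinner_scaleR_right)
  qed
qed

section \<open>Nonnegative polynomials on an interval\<close>

inductive_set tc :: "real \<Rightarrow> real poly set" for c :: real where
  sq: "q * q \<in> tc c"
| lin: "[:0,1:] * (q * q) \<in> tc c"
| rlin: "[:c,-1:] * (q * q) \<in> tc c"
| quad: "[:0,1:] * [:c,-1:] * (q * q) \<in> tc c"
| add: "p \<in> tc c \<Longrightarrow> r \<in> tc c \<Longrightarrow> p + r \<in> tc c"

lemma tc_mult_sq: "p \<in> tc c \<Longrightarrow> (q * q) * p \<in> tc c"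
proof (induction p rule: tc.induct)
  case (sq s)
  have "(q * q) * (s * s) = (q * s) * (q * s)" by (simp add: ac_simps)
  then show ?case using tc.sq by metis
next
  case (lin s)
  have "(q * q) * ([:0,1:] * (s * s)) = [:0,1:] * ((q * s) * (q * s))" by (simp only: ac_simps)
  then show ?case using tc.lin by metis
next
  case (rlin s)
  have "(q * q) * ([:c,-1:] * (s * s)) = [:c,-1:] * ((q * s) * (q * s))" by (simp only: ac_simps)
  then show ?case using tc.rlin by metis
next
  case (quad s)
  have "(q * q) * ([:0,1:] * [:c,-1:] * (s * s)) = [:0,1:] * [:c,-1:] * ((q * s) * (q * s))"
    by (simp only: ac_simps)
  then show ?case using tc.quad by metis
next
  case (add p r)
  then show ?case by (metis distrib_left tc.add)
qed

lemma tc_mult_X: "p \<in> tc c \<Longrightarrow> [:0,1:] * p \<in> tc c"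
proof (induction p rule: tc.induct)
  case (sq s) then show ?case using tc.lin by metis
next
  case (lin s)
  have "[:0,1:] * ([:0,1:] * (s * s)) = ([:0,1:] * s) * ([:0,1:] * s)" by (simp only: ac_simps)
  then show ?case using tc.sq by metis
next
  case (rlin s)
  have "[:0,1:] * ([:c,-1:] * (s * s)) = [:0,1:] * [:c,-1:] * (s * s)" by (simp only: ac_simps)
  then show ?case using tc.quad by metis
next
  case (quad s)
  have "[:0,1:] * ([:0,1:] * [:c,-1:] * (s * s)) = [:c,-1:] * (([:0,1:] * s) * ([:0,1:] * s))"
    by (simp only: ac_simps)
  then show ?case using tc.rlin by metis
next
  case (add p r)
  then show ?case by (metis distrib_left tc.add)
qed

lemma tc_mult_cX: "p \<in> tc c \<Longrightarrow> [:c,-1:] * p \<in> tc c"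
proof (induction p rule: tc.induct)
  case (sq s) then show ?case using tc.rlin by metis
next
  case (lin s)
  have "[:c,-1:] * ([:0,1:] * (s * s)) = [:0,1:] * [:c,-1:] * (s * s)" by (simp only: ac_simps)
  then show ?case using tc.quad by metis
next
  case (rlin s)
  have "[:c,-1:] * ([:c,-1:] * (s * s)) = ([:c,-1:] * s) * ([:c,-1:] * s)" by (simp only: ac_simps)
  then show ?case using tc.sq by metis
next
  case (quad s)
  have "[:c,-1:] * ([:0,1:] * [:c,-1:] * (s * s)) = [:0,1:] * (([:c,-1:] * s) * ([:c,-1:] * s))"
    by (simp only: ac_simps)
  then show ?case using tc.lin by metis
next
  case (add p r)
  then show ?case by (metis distrib_left tc.add)
qed

lemma tc_smult: "0 \<le> a \<Longrightarrow> p \<in> tc c \<Longrightarrow> smult a p \<in> tc c"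
proof -
  assume a: "0 \<le> a" and p: "p \<in> tc c"
  have "smult a p = ([:sqrt a:] * [:sqrt a:]) * p" using a by simp
  then show ?thesis using tc_mult_sq[OF p] by metis
qed

lemma cpoly_ofreal: "poly (map_poly complex_of_real p) (complex_of_real x) = complex_of_real (poly p x)"
  by (induction p) (auto simp: map_poly_pCons)

lemma cmap_add: "map_poly complex_of_real (p + q) = map_poly complex_of_real p + map_poly complex_of_real q"
  by (simp add: poly_eq_iff coeff_map_poly)

lemma cmap_smult: "map_poly complex_of_real (smult a p) = smult (complex_of_real a) (map_poly complex_of_real p)"
  by (simp add: poly_eq_iff coeff_map_poly)

lemma cpoly_mult: "poly (map_poly complex_of_real (p * q)) z
   = poly (map_poly complex_of_real p) z * poly (map_poly complex_of_real q) z"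
proof (induction p)
  case 0 then show ?case by simp
next
  case (pCons a p)
  have "pCons a p * q = smult a q + pCons 0 (p * q)" by simp
  then have "poly (map_poly complex_of_real (pCons a p * q)) z
      = complex_of_real a * poly (map_poly complex_of_real q) z + z * poly (map_poly complex_of_real (p * q)) z"
    by (simp add: cmap_add cmap_smult map_poly_pCons)
  then show ?case using pCons.IH by (simp add: map_poly_pCons algebra_simps)
qed

lemma degree_le1_cases:
  assumes "degree (r::real poly) \<le> 1"
  obtains a b where "r = [:a, b:]"
proof -
  obtain a r1 where r: "r = pCons a r1" by (rule pCons_cases)
  obtain b r2 where r1: "r1 = pCons b r2" by (rule pCons_cases)
  have "r2 = 0"
  proof (rule ccontr)
    assume "r2 \<noteq> 0"
    then have "degree r = Suc (Suc (degree r2))" by (simp add: r r1)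
    then show False using assms by simp
  qed
  then show ?thesis using that r r1 by simp
qed

lemma nonneg_closure:
  fixes q :: "real poly"
  assumes "\<And>t. t \<in> S \<Longrightarrow> 0 \<le> poly q t" "x \<in> closure S"
  shows "0 \<le> poly q x"
  by (rule continuous_ge_on_closure[OF _ assms(2)]) (auto intro: continuous_intros assms(1))

lemma cm2: "cmod z * cmod z = Re z * Re z + Im z * Im z"
  using cmod_power2[of z] by (simp add: power2_eq_square)

lemma tc_complete:
  fixes c :: real and p :: "real poly"
  assumes c: "0 < c"
  shows "(\<And>t. 0 \<le> t \<Longrightarrow> t \<le> c \<Longrightarrow> 0 \<le> poly p t) \<Longrightarrow> p \<in> tc c"
proof (induction "degree p" arbitrary: p rule: less_induct)
  case (less p)
  note nonneg = less.prems
  show ?case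
  proof (cases "degree p = 0")
    case True
    then obtain a where p: "p = [:a:]" by (metis degree_eq_zeroE)
    have a: "a \<ge> 0" using nonneg[of 0] c p by simp
    then have "p = [:sqrt a:] * [:sqrt a:]" by (simp add: p)
    then show ?thesis using tc.sq by metis
  next
    case False
    then have pnz: "p \<noteq> 0" by auto
    have "\<not> constant (poly (map_poly complex_of_real p))"
      using False by (simp add: constant_degree degree_map_poly)
    then obtain z where z: "poly (map_poly complex_of_real p) z = 0"
      using fundamental_theorem_of_algebra by blast
    show ?thesis
    proof (cases "Im z = 0")
      case True
      define r where "r = Re z"
      have "z = complex_of_real r" using True by (simp add: r_def complex_eq_iff)
      then have "poly p r = 0" using z cpoly_ofreal by (metis of_real_eq_0_iff)
      then obtain q where pq: "p = [:-r,1:] * q" using poly_eq_0_iff_dvd by (metis dvdE)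
      have q0: "q \<noteq> 0" using pq False by auto
      have "degree p = degree [:-r,1:] + degree q" unfolding pq using q0 by (intro degree_mult_eq) auto
      then have dq: "degree q < degree p" by simp
      have pt: "poly p t = (t - r) * poly q t" for t unfolding pq by (simp add: algebra_simps)
      have X: "[:-r,1:] * q = [:0,1:] * q + smult (-r) q"
        by (simp add: poly_eq_iff coeff_pCons split: nat.split)
      have cX: "[:-r,1:] * q = [:c,-1:] * (-q) + smult (r - c) (-q)"
        by (simp add: poly_eq_iff coeff_pCons algebra_simps split: nat.split)
      consider "r < 0" | "r > c" | "r = 0" | "r = c" | "0 < r \<and> r < c" by linarith
      then show ?thesis
      proof cases
        case 1
        have "q \<in> tc c"
        proof (rule less.hyps[OF dq])
          fix t assume "0 \<le> t" "t \<le> c"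
          then have "0 \<le> (t - r) * poly q t" "t - r > 0" using nonneg pt 1 by auto
          then show "0 \<le> poly q t" by (simp add: zero_le_mult_iff)
        qed
        then show ?thesis using 1 by (simp only: pq X) (intro tc.add tc_mult_X tc_smult, auto)
      next
        case 2
        have "-q \<in> tc c"
        proof (rule less.hyps)
          show "degree (-q) < degree p" using dq by simp
          fix t assume "0 \<le> t" "t \<le> c"
          then have "0 \<le> (t - r) * poly q t" "t - r < 0" using nonneg pt 2 by auto
          then show "0 \<le> poly (-q) t" by (simp add: zero_le_mult_iff)
        qed
        then show ?thesis using 2 by (simp only: pq cX) (intro tc.add tc_mult_cX tc_smult, auto)
      next
        case 3
        have "q \<in> tc c"
        proof (rule less.hyps[OF dq])
          fix t assume t: "0 \<le> t" "t \<le> c"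
          have "t \<in> closure {0<..c}" using t c by simp
          then show "0 \<le> poly q t"
          proof (rule nonneg_closure[rotated])
            fix s :: real assume "s \<in> {0<..c}"
            then have "0 \<le> (s - r) * poly q s" "s - r > 0" using nonneg pt 3 by auto
            then show "0 \<le> poly q s" by (simp add: zero_le_mult_iff)
          qed
        qed
        moreover have "p = [:0,1:] * q" using pq 3 by simp
        ultimately show ?thesis by (simp only:) (rule tc_mult_X)
      next
        case 4
        have "-q \<in> tc c"
        proof (rule less.hyps)
          show "degree (-q) < degree p" using dq by simp
          fix t assume t: "0 \<le> t" "t \<le> c"
          have "t \<in> closure {0..<c}" using t c by simp
          then show "0 \<le> poly (-q) t"
          proof (rule nonneg_closure[rotated])
            fix s :: real assume "s \<in> {0..<c}"
            then have "0 \<le> (s - r) * poly q s" "s - r < 0" using nonneg pt 4 by auto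
            then show "0 \<le> poly (-q) s" by (simp add: zero_le_mult_iff)
          qed
        qed
        moreover have "p = [:c,-1:] * (-q)" using 4 pq by simp
        ultimately show ?thesis by (simp only:) (rule tc_mult_cX)
      next
        case 5
        have qr1: "0 \<le> poly q r"
        proof (rule nonneg_closure)
          show "r \<in> closure {r<..c}" using 5 by simp
          fix s :: real assume "s \<in> {r<..c}"
          then have "0 \<le> (s - r) * poly q s" "s - r > 0" using nonneg pt 5 by auto
          then show "0 \<le> poly q s" by (simp add: zero_le_mult_iff)
        qed
        have qr2: "0 \<le> poly (-q) r"
        proof (rule nonneg_closure)
          show "r \<in> closure {0..<r}" using 5 by simp
          fix s :: real assume "s \<in> {0..<r}"
          then have "0 \<le> (s - r) * poly q s" "s - r < 0" using nonneg pt 5 by auto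
          then show "0 \<le> poly (-q) s" by (simp add: zero_le_mult_iff)
        qed
        have "poly q r = 0" using qr1 qr2 by simp
        then obtain q2 where qq: "q = [:-r,1:] * q2" using poly_eq_0_iff_dvd by (metis dvdE)
        have q20: "q2 \<noteq> 0" using qq q0 by auto
        have "degree q = degree [:-r,1:] + degree q2" unfolding qq using q20 by (intro degree_mult_eq) auto
        then have dq2: "degree q2 < degree p" using dq by simp
        have p2: "poly p t = (t - r) * (t - r) * poly q2 t" for t unfolding pq qq by (simp add: algebra_simps)
        have pos_out: "0 \<le> poly q2 s" if "s \<in> {r<..c}" for s
        proof -
          have "0 \<le> ((s - r) * (s - r)) * poly q2 s" "(s - r) * (s - r) > 0"
            using nonneg p2 5 that not_real_square_gt_zero[of "s - r"] by auto
          then show ?thesis by (simp add: zero_le_mult_iff)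
        qed
        have "q2 \<in> tc c"
        proof (rule less.hyps[OF dq2])
          fix t assume t: "0 \<le> t" "t \<le> c"
          show "0 \<le> poly q2 t"
          proof (cases "t = r")
            case True
            show ?thesis unfolding True
              by (rule nonneg_closure[of "{r<..c}"]) (use pos_out 5 in auto)
          next
            case False
            have "(t - r) * (t - r) > 0" by (metis False not_real_square_gt_zero right_minus_eq)
            moreover have "0 \<le> ((t - r) * (t - r)) * poly q2 t" using nonneg p2 t by metis
            ultimately show ?thesis by (simp add: zero_le_mult_iff)
          qed
        qed
        moreover have "p = ([:-r,1:] * [:-r,1:]) * q2" using pq qq by (simp only: mult.assoc)
        ultimately show ?thesis using tc_mult_sq by metis
      qed
    next
      case False
      define Q where "Q = [:(cmod z)^2, -2 * Re z, 1:]"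
      have Q0: "Q \<noteq> 0" by (simp add: Q_def)
      have dQ: "degree Q = 2" by (simp add: Q_def)
      have QZ: "poly (map_poly complex_of_real Q) z = 0"
        by (simp add: Q_def map_poly_pCons complex_eq_iff cm2 power2_eq_square algebra_simps)
      define d where "d = p div Q"
      define rm where "rm = p mod Q"
      have pdr: "p = Q * d + rm" by (simp add: d_def rm_def)
      have "poly (map_poly complex_of_real rm) z = 0"
        using z QZ by (subst (asm) pdr) (simp add: cmap_add cpoly_mult)
      moreover have "degree rm \<le> 1"
        using degree_mod_less[OF Q0, of p] dQ by (auto simp: rm_def)
      then obtain a b where ab: "rm = [:a, b:]" by (rule degree_le1_cases)
      ultimately have "complex_of_real a + z * complex_of_real b = 0"
        by (simp add: map_poly_pCons)
      then have "a + Re z * b = 0" "Im z = 0 \<or> b = 0" by (simp_all add: complex_eq_iff)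
      then have "a = 0" "b = 0" using False by auto
      then have pQ: "p = Q * d" using pdr ab by simp
      have d0: "d \<noteq> 0" using pQ pnz by auto
      have dd: "degree d < degree p" using pQ d0 Q0 dQ by (simp add: degree_mult_eq)
      have Qpos: "poly Q t > 0" for t
      proof -
        have "poly Q t = (t - Re z)^2 + (Im z)^2"
          by (simp add: Q_def cm2 power2_eq_square algebra_simps)
        moreover have "(Im z)^2 > 0" using False by simp
        ultimately show ?thesis by (smt (verit) zero_le_power2)
      qed
      have "d \<in> tc c"
      proof (rule less.hyps[OF dd])
        fix t assume "0 \<le> t" "t \<le> c"
        then have "0 \<le> poly Q t * poly d t" using nonneg pQ by (metis poly_mult)
        then show "0 \<le> poly d t" using Qpos[of t] by (simp add: zero_le_mult_iff)
      qed
      moreover have "Q = [:-Re z,1:] * [:-Re z,1:] + [:Im z:] * [:Im z:]"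
        by (simp add: Q_def cm2 power2_eq_square)
      ultimately show ?thesis using pQ
        by (simp only: distrib_right) (intro tc.add tc_mult_sq)
    qed
  qed
qed

section \<open>Positivity of polynomials in a positive operator\<close>

lemma opoly_comm:
  assumes A: "cbounded A"
  shows "opoly p A (opoly q A x) = opoly q A (opoly p A x)"
  by (metis opoly_mult[OF A] mult.commute)

lemma opoly_sq_form:
  assumes A: "cbounded A" and sa: "sa A"
  shows "cinner (opoly (r * (q * q)) A x) x = cinner (opoly r A (opoly q A x)) (opoly q A x)"
proof -
  have "r * (q * q) = q * (r * q)" by (simp add: ac_simps)
  then have "opoly (r * (q * q)) A x = opoly q A (opoly r A (opoly q A x))"
    by (simp only: opoly_mult[OF A])
  then show ?thesis using opoly_sa[OF A sa, of q] by (simp add: sa_def)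
qed

lemma opoly_cX: "cbounded A \<Longrightarrow> opoly [:c,-1:] A y = c *\<^sub>R y - A y"
  by (simp add: opoly_pCons opoly_const cbounded_scaleR cbounded_minus)

lemma opoly_zero_op:
  assumes A: "cbounded A" and A0: "\<And>x. A x = 0"
  shows "opoly p A x = poly p 0 *\<^sub>R x"
proof (induction p)
  case 0 show ?case by simp
next
  case (pCons a p)
  have "opoly (pCons a p) A x = a *\<^sub>R x + A (opoly p A x)" by (rule opoly_pCons[OF A])
  also have "A (opoly p A x) = 0" by (rule A0)
  finally show ?case by simp
qed

lemma posop_onorm0:
  assumes "posop A" "onorm A \<le> 0"
  shows "A x = 0"
proof -
  have "cbounded A" using assms by (simp add: posop_def)
  then have "norm (A x) \<le> onorm A * norm x" by (rule cbounded_onorm)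
  also have "\<dots> \<le> 0" using assms by (simp add: mult_nonpos_nonneg)
  finally show ?thesis by simp
qed

lemma opoly_pos:
  assumes P: "posop A" and c: "onorm A \<le> c" "0 \<le> c"
    and nn: "\<And>t. 0 \<le> t \<Longrightarrow> t \<le> c \<Longrightarrow> 0 \<le> poly p t"
  shows "0 \<le> Re (cinner (opoly p A x) x)"
proof -
  have A: "cbounded A" and sa: "sa A" and pos: "\<And>y. 0 \<le> Re (cinner (A y) y)"
    using P by (auto simp: posop_def)
  show ?thesis
  proof (cases "c = 0")
    case True
    then have A0: "\<And>x. A x = 0" using posop_onorm0[OF P] c by simp
    have "0 \<le> poly p 0" using nn True by simp
    then show ?thesis by (simp add: opoly_zero_op[OF A A0] cinner_scaleR_left Re_cinner_self)
  next
    case False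
    then have c0: "0 < c" using c by simp
    have "p \<in> tc c" using tc_complete[OF c0] nn by blast
    then show ?thesis
    proof (induction p arbitrary: x rule: tc.induct)
      case (sq q)
      have "cinner (opoly (1 * (q * q)) A x) x = cinner (opoly 1 A (opoly q A x)) (opoly q A x)"
        by (rule opoly_sq_form[OF A sa])
      then show ?case by (simp add: opoly_one Re_cinner_self)
    next
      case (lin q)
      have "cinner (opoly ([:0,1:] * (q * q)) A x) x = cinner (opoly [:0,1:] A (opoly q A x)) (opoly q A x)"
        by (rule opoly_sq_form[OF A sa])
      then show ?case by (simp add: opoly_X[OF A] pos)
    next
      case (rlin q)
      have "cinner (opoly ([:c,-1:] * (q * q)) A x) x = cinner (opoly [:c,-1:] A (opoly q A x)) (opoly q A x)"
        by (rule opoly_sq_form[OF A sa])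
      also have "\<dots> = complex_of_real c * cinner (opoly q A x) (opoly q A x) - cinner (A (opoly q A x)) (opoly q A x)"
        by (simp add: opoly_cX[OF A] cinner_diff_left cinner_scaleR_left)
      finally have "Re (cinner (opoly ([:c,-1:] * (q * q)) A x) x)
          = c * (norm (opoly q A x))^2 - Re (cinner (A (opoly q A x)) (opoly q A x))"
        by (simp add: Re_cinner_self)
      moreover have "Re (cinner (A (opoly q A x)) (opoly q A x)) \<le> c * (norm (opoly q A x))^2"
        using Re_le_onorm[OF A, of "opoly q A x"] mult_right_mono[OF c(1), of "(norm (opoly q A x))^2"]
        by simp
      ultimately show ?case by simp
    next
      case (quad q)
      define y where "y = opoly q A x"
      have "cinner (opoly (([:0,1:] * [:c,-1:]) * (q * q)) A x) x = cinner (opoly ([:0,1:] * [:c,-1:]) A y) y"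
        unfolding y_def by (rule opoly_sq_form[OF A sa])
      also have "opoly ([:0,1:] * [:c,-1:]) A y = c *\<^sub>R A y - A (A y)"
        by (simp only: opoly_mult[OF A] opoly_X[OF A] opoly_cX[OF A] cbounded_diff[OF A] cbounded_scaleR[OF A])
      finally have eq: "cinner (opoly ([:0,1:] * [:c,-1:] * (q * q)) A x) x = cinner (c *\<^sub>R A y - A (A y)) y" .
      have aa: "cinner (A (A y)) y = cinner (A y) (A y)" using sa by (simp add: sa_def)
      have "Re (cinner (opoly ([:0,1:] * [:c,-1:] * (q * q)) A x) x)
          = c * Re (cinner (A y) y) - (norm (A y))^2"
        unfolding eq by (simp add: cinner_diff_left cinner_scaleR_left aa Re_cinner_self)
      moreover have "(norm (A y))^2 \<le> c * Re (cinner (A y) y)" by (rule posop_sq_le[OF P c(1)])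
      ultimately show ?case by simp
    next
      case (add p r)
      then show ?case by (simp add: opoly_add cinner_add_left)
    qed
  qed
qed

lemma opoly_norm_bound:
  assumes P: "posop A" and c: "onorm A \<le> c" "0 \<le> c"
    and bd: "\<And>t. 0 \<le> t \<Longrightarrow> t \<le> c \<Longrightarrow> \<bar>poly p t\<bar> \<le> M"
  shows "norm (opoly p A x) \<le> M * norm x"
proof -
  have A: "cbounded A" and sa: "sa A" using P by (auto simp: posop_def)
  have M0: "0 \<le> M" using bd[of 0] c(2) abs_ge_zero order_trans by blast
  have h1: "0 \<le> Re (cinner (opoly ([:M^2:] - p * p) A x) x)"
  proof (rule opoly_pos[OF P c])
    fix t assume "0 \<le> t" "t \<le> c"
    then have "\<bar>poly p t\<bar> \<le> M" by (rule bd)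
    then have "\<bar>poly p t\<bar>^2 \<le> M^2" by (rule power_mono) simp
    then have "(poly p t)^2 \<le> M^2" by simp
    then show "0 \<le> poly ([:M^2:] - p * p) t" by (simp add: power2_eq_square)
  qed
  have h2: "opoly ([:M^2:] - p * p) A x = M^2 *\<^sub>R x - opoly p A (opoly p A x)"
    by (simp only: opoly_diff opoly_const opoly_mult[OF A])
  have h3: "cinner (opoly p A (opoly p A x)) x = cinner (opoly p A x) (opoly p A x)"
    using opoly_sa[OF A sa, of p] by (simp add: sa_def)
  have h4: "cinner (M^2 *\<^sub>R x - opoly p A (opoly p A x)) x
      = complex_of_real (M^2) * cinner x x - cinner (opoly p A x) (opoly p A x)"
    by (simp only: cinner_diff_left cinner_scaleR_left h3)
  have "0 \<le> M^2 * (norm x)^2 - (norm (opoly p A x))^2"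
    using h1 unfolding h2 h4 by (simp only: Re_cinner_self minus_complex.sel Re_complex_of_real times_complex.sel Im_complex_of_real)

  then have "(norm (opoly p A x))^2 \<le> (M * norm x)^2"
    unfolding power_mult_distrib by linarith
  then show ?thesis by (rule power2_le_imp_le) (use M0 in simp)
qed

lemma norm_scaleC: "norm (scaleC c x) = cmod c * norm (x::'a::complex_inner)"
proof -
  have "complex_of_real ((norm (scaleC c x))^2) = cinner (scaleC c x) (scaleC c x)" by (simp only: cinner_self)
  also have "\<dots> = c * cnj c * cinner x x" by (simp add: cinner_scaleC_left cinner_scaleC_right)
  also have "\<dots> = complex_of_real ((cmod c)^2) * complex_of_real ((norm x)^2)"
    by (metis complex_norm_square cinner_self)
  finally have "(norm (scaleC c x))^2 = (cmod c * norm x)^2"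
    by (metis of_real_eq_iff of_real_mult power_mult_distrib)
  then show ?thesis by (simp add: power2_eq_iff_nonneg)
qed

lemma bounded_linear_scaleC: "bounded_linear (\<lambda>x::'a::complex_inner. scaleC c x)"
  by (rule bounded_linear_intro[of _ "cmod c"])
     (simp_all add: scaleC_add_right scaleC_scaleR_commute norm_scaleC)

lemma bounded_linear_cinner_left: "bounded_linear (\<lambda>a::'a::complex_inner. cinner a y)"
  by (rule bounded_linear_intro[of _ "norm y"])
     (simp_all add: cinner_add_left cinner_scaleR_left scaleR_conv_of_real cauchy_schwarz)

lemma bounded_linear_cinner_right: "bounded_linear (\<lambda>b::'a::complex_inner. cinner y b)"
proof (rule bounded_linear_intro[of _ "norm y"])
  fix x show "norm (cinner y x) \<le> norm x * norm y"
    using cauchy_schwarz[of y x] by (simp add: mult.commute)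
qed (simp_all add: cinner_add_right cinner_scaleR_right scaleR_conv_of_real)

lemma tendsto_cinner_left: "(a \<longlongrightarrow> l) F \<Longrightarrow> ((\<lambda>n. cinner (a n) y) \<longlongrightarrow> cinner l (y::'a::complex_inner)) F"
  by (rule bounded_linear.tendsto[OF bounded_linear_cinner_left])

lemma tendsto_cinner_right: "(a \<longlongrightarrow> l) F \<Longrightarrow> ((\<lambda>n. cinner y (a n)) \<longlongrightarrow> cinner (y::'a::complex_inner) l) F"
  by (rule bounded_linear.tendsto[OF bounded_linear_cinner_right])

lemma tendsto_cbounded: "cbounded T \<Longrightarrow> (a \<longlongrightarrow> l) F \<Longrightarrow> ((\<lambda>n. T (a n)) \<longlongrightarrow> T l) F"
  by (rule bounded_linear.tendsto[OF cbounded_bounded_linear])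

lemma poly_approx:
  fixes f :: "real \<Rightarrow> real"
  assumes "continuous_on {a..b} f" "0 < e"
  obtains p where "\<And>t. t \<in> {a..b} \<Longrightarrow> \<bar>poly p t - f t\<bar> < e"
proof -
  obtain g where g: "real_polynomial_function g" "\<And>x. x \<in> {a..b} \<Longrightarrow> \<bar>f x - g x\<bar> < e"
    using Stone_Weierstrass_real_polynomial_function[OF compact_Icc assms] by blast
  then obtain c n where gc: "g = (\<lambda>x. \<Sum>i\<le>n. c i * x^i)"
    using real_polynomial_function_iff_sum by blast
  define p where "p = (\<Sum>i\<le>n. monom (c i) i)"
  have "poly p x = g x" for x by (simp add: p_def gc poly_sum poly_monom)
  then show ?thesis using that g(2) by (metis abs_minus_commute)
qed

lemma poly_approx_seq:
  fixes f :: "real \<Rightarrow> real"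
  assumes "continuous_on {a..b} f"
  obtains ps where "\<And>n t. t \<in> {a..b} \<Longrightarrow> \<bar>poly (ps n) t - f t\<bar> \<le> 1 / (real n + 1)"
proof -
  have "\<forall>n. \<exists>p. \<forall>t\<in>{a..b}. \<bar>poly p t - f t\<bar> \<le> 1 / (real n + 1)"
  proof
    fix n
    obtain p where "\<And>t. t \<in> {a..b} \<Longrightarrow> \<bar>poly p t - f t\<bar> < 1 / (real n + 1)"
      using poly_approx[OF assms, of "1 / (real n + 1)"] by auto
    then show "\<exists>p. \<forall>t\<in>{a..b}. \<bar>poly p t - f t\<bar> \<le> 1 / (real n + 1)" by (meson less_imp_le)
  qed
  then show ?thesis using that by metis
qed

lemma inv_Suc_tendsto: "(\<lambda>n. 1 / (real n + 1)) \<longlonglongrightarrow> 0"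
  using LIMSEQ_inverse_real_of_nat by (simp add: inverse_eq_divide add.commute)

lemma bound_seq_uniform:
  fixes ps :: "nat \<Rightarrow> real poly" and f :: "real \<Rightarrow> real"
  assumes "\<And>n t. t \<in> S \<Longrightarrow> \<bar>poly (ps n) t - f t\<bar> \<le> e n" "e \<longlonglongrightarrow> 0"
  shows "uniform_limit S (\<lambda>n t. poly (ps n) t) f sequentially"
  unfolding uniform_limit_iff
proof (intro allI impI)
  fix \<epsilon> :: real assume "0 < \<epsilon>"
  then have "\<forall>\<^sub>F n in sequentially. dist (e n) 0 < \<epsilon>" using assms(2) tendsto_iff by blast
  then have "\<forall>\<^sub>F n in sequentially. \<bar>e n\<bar> < \<epsilon>" by (simp add: dist_real_def)
  then show "\<forall>\<^sub>F n in sequentially. \<forall>t\<in>S. dist (poly (ps n) t) (f t) < \<epsilon>"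
  proof eventually_elim
    case (elim n)
    show ?case using assms(1)[of _ n] elim by (force simp: dist_real_def)
  qed
qed

section \<open>Existence of the functional calculus\<close>

lemma opoly_diff_bound:
  assumes P: "posop A" and bd: "\<And>t. t \<in> {0..onorm A} \<Longrightarrow> \<bar>poly p t - poly q t\<bar> \<le> M"
  shows "norm (opoly p A x - opoly q A x) \<le> M * norm x"
proof -
  have c0: "0 \<le> onorm A" using P cbounded_onorm_nonneg by (auto simp: posop_def)
  have "norm (opoly (p - q) A x) \<le> M * norm x"
    by (rule opoly_norm_bound[OF P order_refl c0]) (use bd in auto)
  then show ?thesis by (simp add: opoly_diff)
qed

lemma onorm_le_from_bound:
  assumes "cbounded T" "\<And>x. norm (T x) \<le> M * norm x" "0 \<le> M"
  shows "onorm T \<le> M"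
  using assms by (intro onorm_bound) auto

lemma fcalc_exists:
  fixes A :: "'a::{complex_inner,complete_space} \<Rightarrow> 'a" and f :: "real \<Rightarrow> real"
  assumes P: "posop A" and f: "continuous_on {0..onorm A} f"
  shows "cbounded (fcalc f A) \<and>
     (\<forall>ps. uniform_limit {0..onorm A} (\<lambda>n t. poly (ps n) t) f sequentially \<longrightarrow>
        (\<lambda>n. onorm (\<lambda>x. opoly (ps n) A x - fcalc f A x)) \<longlonglongrightarrow> 0)"
proof -
  define c where "c = onorm A"
  have A: "cbounded A" using P by (simp add: posop_def)
  have c0: "0 \<le> c" using A cbounded_onorm_nonneg by (simp add: c_def)
  obtain ps0 where ps0: "\<And>n t. t \<in> {0..c} \<Longrightarrow> \<bar>poly (ps0 n) t - f t\<bar> \<le> 1 / (real n + 1)"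
    using poly_approx_seq[OF f[folded c_def]] by blast
  have mn: "norm (opoly (ps0 m) A x - opoly (ps0 n) A x) \<le> (1 / (real m + 1) + 1 / (real n + 1)) * norm x" for m n x
  proof (rule opoly_diff_bound[OF P])
    fix t assume t: "t \<in> {0..onorm A}"
    have "\<bar>poly (ps0 m) t - poly (ps0 n) t\<bar> \<le> \<bar>poly (ps0 m) t - f t\<bar> + \<bar>poly (ps0 n) t - f t\<bar>" by linarith
    also have "\<dots> \<le> 1 / (real m + 1) + 1 / (real n + 1)" using ps0 t by (intro add_mono) (auto simp: c_def)
    finally show "\<bar>poly (ps0 m) t - poly (ps0 n) t\<bar> \<le> 1 / (real m + 1) + 1 / (real n + 1)" .
  qed
  have cau: "Cauchy (\<lambda>n. opoly (ps0 n) A x)" for x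
  proof (rule metric_CauchyI)
    fix e :: real assume e: "0 < e"
    have K: "0 < norm x + 1" using add_nonneg_pos[OF norm_ge_zero[of x] zero_less_one] by simp
    have epos: "0 < e / (2 * (norm x + 1))" using e K by simp
    obtain N :: nat where N: "inverse (real (Suc N)) < e / (2 * (norm x + 1))"
      using reals_Archimedean[OF epos] by blast
    have N': "1 / (real N + 1) < e / (2 * (norm x + 1))" using N by (simp add: inverse_eq_divide add.commute)
    show "\<exists>M. \<forall>m\<ge>M. \<forall>n\<ge>M. dist (opoly (ps0 m) A x) (opoly (ps0 n) A x) < e"
    proof (intro exI allI impI)
      fix m n assume m: "m \<ge> N" and n: "n \<ge> N"
      have le: "1 / (real k + 1) \<le> 1 / (real N + 1)" if "k \<ge> N" for k
        using that by (simp add: frac_le)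
      have "dist (opoly (ps0 m) A x) (opoly (ps0 n) A x) \<le> (1 / (real m + 1) + 1 / (real n + 1)) * norm x"
        using mn by (simp add: dist_norm)
      also have "\<dots> \<le> (2 / (real N + 1)) * norm x"
        using le[OF m] le[OF n] by (intro mult_right_mono) auto
      also have "\<dots> \<le> (2 / (real N + 1)) * (norm x + 1)" by (intro mult_left_mono) auto
      also have "\<dots> < (2 * (e / (2 * (norm x + 1)))) * (norm x + 1)"
        using N' K by (intro mult_strict_right_mono) auto
      also have "\<dots> = e" using K by (auto simp: field_simps)
      finally show "dist (opoly (ps0 m) A x) (opoly (ps0 n) A x) < e" .
    qed
  qed
  define B where "B x = lim (\<lambda>n. opoly (ps0 n) A x)" for x
  have conv: "(\<lambda>n. opoly (ps0 n) A x) \<longlonglongrightarrow> B x" for x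
    unfolding B_def using cau[of x] by (simp add: Cauchy_convergent_iff convergent_LIMSEQ_iff)
  have err: "norm (opoly (ps0 n) A x - B x) \<le> 1 / (real n + 1) * norm x" for n x
  proof (rule tendsto_le[OF sequentially_bot])
    show "(\<lambda>m. (1 / (real n + 1) + 1 / (real m + 1)) * norm x) \<longlonglongrightarrow> 1 / (real n + 1) * norm x"
      using tendsto_mult[OF tendsto_add[OF tendsto_const inv_Suc_tendsto] tendsto_const, of "1 / (real n + 1)" "norm x"]
      by simp
    show "(\<lambda>m. norm (opoly (ps0 n) A x - opoly (ps0 m) A x)) \<longlonglongrightarrow> norm (opoly (ps0 n) A x - B x)"
      by (intro tendsto_intros conv)
    show "\<forall>\<^sub>F m in sequentially. norm (opoly (ps0 n) A x - opoly (ps0 m) A x) \<le> (1 / (real n + 1) + 1 / (real m + 1)) * norm x"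
      using mn by simp
  qed
  have Pcb: "cbounded (opoly p A)" for p by (rule opoly_cbounded[OF A])
  have Bcb: "cbounded B"
  proof (rule cboundedI[where K="onorm (opoly (ps0 0) A) + 1"])
    fix x y
    have "(\<lambda>n. opoly (ps0 n) A (x + y)) \<longlonglongrightarrow> B x + B y"
      using tendsto_add[OF conv[of x] conv[of y]] by (simp add: cbounded_add[OF Pcb])
    then show "B (x + y) = B x + B y" using conv[of "x + y"] LIMSEQ_unique by blast
  next
    fix a x
    have "(\<lambda>n. opoly (ps0 n) A (scaleC a x)) \<longlonglongrightarrow> scaleC a (B x)"
      using bounded_linear.tendsto[OF bounded_linear_scaleC conv[of x], of a]
      by (simp add: cbounded_scaleC[OF Pcb])
    then show "B (scaleC a x) = scaleC a (B x)" using conv[of "scaleC a x"] LIMSEQ_unique by blast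
  next
    fix x
    have n1: "norm (B x) \<le> norm (opoly (ps0 0) A x) + norm (opoly (ps0 0) A x - B x)"
      using norm_triangle_sub[of "B x" "opoly (ps0 0) A x"] norm_minus_commute[of "B x" "opoly (ps0 0) A x"]
      by simp
    have n2: "norm (opoly (ps0 0) A x - B x) \<le> norm x" using err[of 0 x] by simp
    have n3: "norm (opoly (ps0 0) A x) \<le> onorm (opoly (ps0 0) A) * norm x" by (rule cbounded_onorm[OF Pcb])
    show "norm (B x) \<le> norm x * (onorm (opoly (ps0 0) A) + 1)"
      using n1 n2 n3 by (simp add: algebra_simps)
  qed
  have hprop: "\<forall>ps. uniform_limit {0..onorm A} (\<lambda>n t. poly (ps n) t) f sequentially \<longrightarrow>
        (\<lambda>n. onorm (\<lambda>x. opoly (ps n) A x - B x)) \<longlonglongrightarrow> 0"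
  proof (intro allI impI)
    fix ps assume ul: "uniform_limit {0..onorm A} (\<lambda>n t. poly (ps n) t) f sequentially"
    show "(\<lambda>n. onorm (\<lambda>x. opoly (ps n) A x - B x)) \<longlonglongrightarrow> 0"
      unfolding tendsto_iff
    proof (intro allI impI)
      fix \<epsilon> :: real assume \<epsilon>: "0 < \<epsilon>"
      have ev1: "\<forall>\<^sub>F n in sequentially. \<forall>t\<in>{0..onorm A}. dist (poly (ps n) t) (f t) < \<epsilon> / 4"
        using ul[unfolded uniform_limit_iff, rule_format, of "\<epsilon>/4"] \<epsilon> by simp
      have ev2: "\<forall>\<^sub>F n in sequentially. dist (1 / (real n + 1)) 0 < \<epsilon> / 4"
        using inv_Suc_tendsto[unfolded tendsto_iff, rule_format, of "\<epsilon>/4"] \<epsilon> by simp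
      show "\<forall>\<^sub>F n in sequentially. dist (onorm (\<lambda>x. opoly (ps n) A x - B x)) 0 < \<epsilon>"
        using ev1 ev2
      proof eventually_elim
        case (elim n)
        have e4: "1 / (real n + 1) < \<epsilon> / 4" using elim(2) by simp
        have dcb: "cbounded (\<lambda>x. opoly (ps n) A x - B x)" by (rule cbounded_minus_op[OF Pcb Bcb])
        have "onorm (\<lambda>x. opoly (ps n) A x - B x) \<le> 3 * \<epsilon> / 4"
        proof (rule onorm_le_from_bound[OF dcb])
          fix x
          have "norm (opoly (ps n) A x - opoly (ps0 n) A x) \<le> (\<epsilon> / 2) * norm x"
          proof (rule opoly_diff_bound[OF P])
            fix t assume t: "t \<in> {0..onorm A}"
            have "\<bar>poly (ps n) t - f t\<bar> < \<epsilon> / 4" using elim(1) t by (auto simp: dist_real_def)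
            moreover have "\<bar>poly (ps0 n) t - f t\<bar> \<le> 1 / (real n + 1)" using ps0 t by (auto simp: c_def)
            ultimately show "\<bar>poly (ps n) t - poly (ps0 n) t\<bar> \<le> \<epsilon> / 2" using e4 by linarith
          qed
          moreover have "norm (opoly (ps0 n) A x - B x) \<le> (\<epsilon> / 4) * norm x"
          proof -
            have "1 / (real n + 1) * norm x \<le> (\<epsilon> / 4) * norm x"
              using e4 by (intro mult_right_mono) auto
            then show ?thesis using err[of n x] by linarith
          qed
          ultimately have "norm (opoly (ps n) A x - B x) \<le> (\<epsilon> / 2) * norm x + (\<epsilon> / 4) * norm x"
            by (rule norm_diff_triangle_le)
          then show "norm (opoly (ps n) A x - B x) \<le> 3 * \<epsilon> / 4 * norm x" by (simp add: algebra_simps)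
        qed (use \<epsilon> in simp)
        moreover have "0 \<le> onorm (\<lambda>x. opoly (ps n) A x - B x)" by (rule cbounded_onorm_nonneg[OF dcb])
        ultimately show ?case using \<epsilon> by (simp add: dist_real_def)
      qed
    qed
  qed
  have ul0: "uniform_limit {0..onorm A} (\<lambda>n t. poly (ps0 n) t) f sequentially"
    by (rule bound_seq_uniform[OF _ inv_Suc_tendsto]) (use ps0 in \<open>auto simp: c_def\<close>)
  have "fcalc f A = B"
    unfolding fcalc_def
  proof (rule the_equality)
    show "cbounded B \<and> (\<forall>ps. uniform_limit {0..onorm A} (\<lambda>n t. poly (ps n) t) f sequentially \<longrightarrow>
        (\<lambda>n. onorm (\<lambda>x. opoly (ps n) A x - B x)) \<longlonglongrightarrow> 0)" using Bcb hprop by blast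
  next
    fix B' assume B': "cbounded B' \<and> (\<forall>ps. uniform_limit {0..onorm A} (\<lambda>n t. poly (ps n) t) f sequentially \<longrightarrow>
        (\<lambda>n. onorm (\<lambda>x. opoly (ps n) A x - B' x)) \<longlonglongrightarrow> 0)"
    have l1: "(\<lambda>n. onorm (\<lambda>x. opoly (ps0 n) A x - B' x)) \<longlonglongrightarrow> 0" using B' ul0 by blast
    have l2: "(\<lambda>n. onorm (\<lambda>x. opoly (ps0 n) A x - B x)) \<longlonglongrightarrow> 0" using hprop ul0 by blast
    show "B' = B"
    proof
      fix x
      have "norm (B' x - B x) \<le> 0"
      proof (rule tendsto_le[OF sequentially_bot])
        show "(\<lambda>n. (onorm (\<lambda>x. opoly (ps0 n) A x - B' x) + onorm (\<lambda>x. opoly (ps0 n) A x - B x)) * norm x) \<longlonglongrightarrow> 0"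
          using tendsto_mult[OF tendsto_add[OF l1 l2] tendsto_const, of "norm x"] by simp
        show "((\<lambda>n. norm (B' x - B x)) \<longlongrightarrow> norm (B' x - B x)) sequentially" by simp
        show "\<forall>\<^sub>F n in sequentially. norm (B' x - B x) \<le> (onorm (\<lambda>x. opoly (ps0 n) A x - B' x) + onorm (\<lambda>x. opoly (ps0 n) A x - B x)) * norm x"
        proof (intro always_eventually allI)
          fix n
          have d1: "norm (opoly (ps0 n) A x - B' x) \<le> onorm (\<lambda>x. opoly (ps0 n) A x - B' x) * norm x"
            by (rule cbounded_onorm[OF cbounded_minus_op[OF Pcb]]) (use B' in blast)
          have d2: "norm (opoly (ps0 n) A x - B x) \<le> onorm (\<lambda>x. opoly (ps0 n) A x - B x) * norm x"
            by (rule cbounded_onorm[OF cbounded_minus_op[OF Pcb Bcb]])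
          have "norm (B' x - B x) \<le> norm (opoly (ps0 n) A x - B' x) + norm (opoly (ps0 n) A x - B x)"
            by (rule norm_diff_triangle_le[of _ "opoly (ps0 n) A x"]) (simp_all add: norm_minus_commute)
          then show "norm (B' x - B x) \<le> (onorm (\<lambda>x. opoly (ps0 n) A x - B' x) + onorm (\<lambda>x. opoly (ps0 n) A x - B x)) * norm x"
            using d1 d2 by (simp add: algebra_simps)
        qed
      qed
      then show "B' x = B x" by simp
    qed
  qed
  then show ?thesis using Bcb hprop by simp
qed

lemma cont_bound:
  fixes f :: "real \<Rightarrow> real"
  assumes "continuous_on {a..b} f"
  shows "\<exists>M. \<forall>t\<in>{a..b}. \<bar>f t\<bar> \<le> M"
proof -
  have "bounded (f ` {a..b})"
    by (rule compact_imp_bounded[OF compact_continuous_image[OF assms compact_Icc]])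
  then obtain M where "\<forall>y\<in>f ` {a..b}. norm y \<le> M" using bounded_pos by blast
  then show ?thesis by auto
qed

lemma inv_Suc_tendsto_mult: "(\<lambda>n. K * (1 / (real n + 1))) \<longlonglongrightarrow> 0"
  using tendsto_mult[OF tendsto_const inv_Suc_tendsto, of K] by simp

lemma tendsto_from_norm_bound:
  assumes "\<And>n. norm (X n - L) \<le> g n" "g \<longlonglongrightarrow> 0"
  shows "X \<longlonglongrightarrow> (L::'b::real_normed_vector)"
proof -
  have "(\<lambda>n. X n - L) \<longlonglongrightarrow> 0"
    by (rule Lim_null_comparison[OF always_eventually assms(2)]) (use assms(1) in auto)
  then show ?thesis using tendsto_add[of "\<lambda>n. X n - L" 0 sequentially "\<lambda>n. L" L] by simp
qed

context
  fixes A :: "'a::{complex_inner,complete_space} \<Rightarrow> 'a"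
  assumes P: "posop A"
begin

lemma fcalc_cb: "continuous_on {0..onorm A} f \<Longrightarrow> cbounded (fcalc f A)"
  using fcalc_exists[OF P] by blast

lemma fcalc_lim:
  assumes f: "continuous_on {0..onorm A} f"
    and bd: "\<And>n t. t \<in> {0..onorm A} \<Longrightarrow> \<bar>poly (ps n) t - f t\<bar> \<le> e n" and e: "e \<longlonglongrightarrow> 0"
  shows "(\<lambda>n. opoly (ps n) A x) \<longlonglongrightarrow> fcalc f A x"
proof -
  have ul: "uniform_limit {0..onorm A} (\<lambda>n t. poly (ps n) t) f sequentially"
    by (rule bound_seq_uniform[OF bd e])
  have on: "(\<lambda>n. onorm (\<lambda>x. opoly (ps n) A x - fcalc f A x)) \<longlonglongrightarrow> 0"
    using fcalc_exists[OF P f] ul by blast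
  have cb: "cbounded (\<lambda>x. opoly (ps n) A x - fcalc f A x)" for n
    using cbounded_minus_op[OF opoly_cbounded fcalc_cb[OF f]] P by (simp add: posop_def)
  show ?thesis
  proof (rule tendsto_from_norm_bound)
    show "norm (opoly (ps n) A x - fcalc f A x) \<le> onorm (\<lambda>x. opoly (ps n) A x - fcalc f A x) * norm x" for n
      by (rule cbounded_onorm[OF cb])
    show "(\<lambda>n. onorm (\<lambda>x. opoly (ps n) A x - fcalc f A x) * norm x) \<longlonglongrightarrow> 0"
      using tendsto_mult[OF on tendsto_const, of "norm x"] by simp
  qed
qed

lemma fcalc_seq:
  assumes f: "continuous_on {0..onorm A} f"
  obtains ps where "\<And>n t. t \<in> {0..onorm A} \<Longrightarrow> \<bar>poly (ps n) t - f t\<bar> \<le> 1 / (real n + 1)"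
    "\<And>x. (\<lambda>n. opoly (ps n) A x) \<longlonglongrightarrow> fcalc f A x"
proof -
  obtain ps where ps: "\<And>n t. t \<in> {0..onorm A} \<Longrightarrow> \<bar>poly (ps n) t - f t\<bar> \<le> 1 / (real n + 1)"
    using poly_approx_seq[OF f] by blast
  show ?thesis by (rule that[OF ps fcalc_lim[OF f ps inv_Suc_tendsto]])
qed

lemma fcalc_seq_ex:
  assumes f: "continuous_on {0..onorm A} f"
  shows "\<exists>ps. (\<forall>n t. t \<in> {0..onorm A} \<longrightarrow> \<bar>poly (ps n) t - f t\<bar> \<le> 1 / (real n + 1))
    \<and> (\<forall>x. (\<lambda>n. opoly (ps n) A x) \<longlonglongrightarrow> fcalc f A x)"
proof -
  obtain ps where ps: "\<And>n t. t \<in> {0..onorm A} \<Longrightarrow> \<bar>poly (ps n) t - f t\<bar> \<le> 1 / (real n + 1)"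
    using poly_approx_seq[OF f] by blast
  show ?thesis using ps fcalc_lim[OF f ps inv_Suc_tendsto] by blast
qed

lemma fcalc_poly: "fcalc (poly p) A x = opoly p A x"
proof -
  have "(\<lambda>n. opoly p A x) \<longlonglongrightarrow> fcalc (poly p) A x"
  proof (rule fcalc_lim[where ps="\<lambda>n. p" and e="\<lambda>n. 0"])
    show "continuous_on {0..onorm A} (poly p)"
      using continuous_on_poly[OF continuous_on_id, of _ p] by simp
  qed simp_all
  then have "opoly p A x = fcalc (poly p) A x" by (rule LIMSEQ_const_iff[THEN iffD1])
  then show ?thesis by simp
qed

lemma fcalc_cong:
  assumes f: "continuous_on {0..onorm A} f" and eq: "\<And>t. t \<in> {0..onorm A} \<Longrightarrow> f t = g t"
  shows "fcalc f A x = fcalc g A x"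
proof -
  have g: "continuous_on {0..onorm A} g" by (rule continuous_on_eq[OF f eq])
  obtain ps where ps0: "\<forall>n t. t \<in> {0..onorm A} \<longrightarrow> \<bar>poly (ps n) t - f t\<bar> \<le> 1 / (real n + 1)"
    and l0: "\<forall>x. (\<lambda>n. opoly (ps n) A x) \<longlonglongrightarrow> fcalc f A x" using fcalc_seq_ex[OF f] by blast
  note ps = ps0[rule_format] and l = l0[rule_format]
  have "(\<lambda>n. opoly (ps n) A x) \<longlonglongrightarrow> fcalc g A x"
  proof (rule fcalc_lim[OF g _ inv_Suc_tendsto])
    fix n t assume "t \<in> {0..onorm A}"
    then show "\<bar>poly (ps n) t - g t\<bar> \<le> 1 / (real n + 1)" using ps[of t n] eq[of t] by simp
  qed
  then show ?thesis using l[of x] LIMSEQ_unique by blast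
qed

lemma fcalc_lincomb:
  assumes f: "continuous_on {0..onorm A} f" and g: "continuous_on {0..onorm A} g"
  shows "fcalc (\<lambda>t. a * f t + b * g t) A x = a *\<^sub>R fcalc f A x + b *\<^sub>R fcalc g A x"
proof -
  obtain ps where ps0: "\<forall>n t. t \<in> {0..onorm A} \<longrightarrow> \<bar>poly (ps n) t - f t\<bar> \<le> 1 / (real n + 1)"
    and l10: "\<forall>x. (\<lambda>n. opoly (ps n) A x) \<longlonglongrightarrow> fcalc f A x" using fcalc_seq_ex[OF f] by blast
  note ps = ps0[rule_format] and l1 = l10[rule_format]
  obtain qs where qs0: "\<forall>n t. t \<in> {0..onorm A} \<longrightarrow> \<bar>poly (qs n) t - g t\<bar> \<le> 1 / (real n + 1)"
    and l20: "\<forall>x. (\<lambda>n. opoly (qs n) A x) \<longlonglongrightarrow> fcalc g A x" using fcalc_seq_ex[OF g] by blast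
  note qs = qs0[rule_format] and l2 = l20[rule_format]
  have h: "continuous_on {0..onorm A} (\<lambda>t. a * f t + b * g t)"
    using f g by (intro continuous_intros)
  have "(\<lambda>n. opoly (smult a (ps n) + smult b (qs n)) A x) \<longlonglongrightarrow> fcalc (\<lambda>t. a * f t + b * g t) A x"
  proof (rule fcalc_lim[OF h _ inv_Suc_tendsto_mult[of "\<bar>a\<bar> + \<bar>b\<bar>"]])
    fix n t assume t: "t \<in> {0..onorm A}"
    have "\<bar>poly (smult a (ps n) + smult b (qs n)) t - (a * f t + b * g t)\<bar>
        = \<bar>a * (poly (ps n) t - f t) + b * (poly (qs n) t - g t)\<bar>" by (simp add: algebra_simps)
    also have "\<dots> \<le> \<bar>a\<bar> * \<bar>poly (ps n) t - f t\<bar> + \<bar>b\<bar> * \<bar>poly (qs n) t - g t\<bar>"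
      using abs_triangle_ineq[of "a * (poly (ps n) t - f t)" "b * (poly (qs n) t - g t)"] by (simp add: abs_mult)
    also have "\<dots> \<le> \<bar>a\<bar> * (1 / (real n + 1)) + \<bar>b\<bar> * (1 / (real n + 1))"
      using ps[OF t, of n] qs[OF t, of n] by (intro add_mono mult_left_mono) auto
    also have "\<dots> = (\<bar>a\<bar> + \<bar>b\<bar>) * (1 / (real n + 1))" by (rule distrib_right[symmetric])
    finally show "\<bar>poly (smult a (ps n) + smult b (qs n)) t - (a * f t + b * g t)\<bar> \<le> (\<bar>a\<bar> + \<bar>b\<bar>) * (1 / (real n + 1))" .
  qed
  moreover have "(\<lambda>n. opoly (smult a (ps n) + smult b (qs n)) A x) \<longlonglongrightarrow> a *\<^sub>R fcalc f A x + b *\<^sub>R fcalc g A x"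
    using tendsto_add[OF tendsto_scaleR[OF tendsto_const l1] tendsto_scaleR[OF tendsto_const l2]]
    by (simp add: opoly_add opoly_smult)
  ultimately show ?thesis using LIMSEQ_unique by blast
qed

lemma fcalc_pos:
  assumes f: "continuous_on {0..onorm A} f" and nn: "\<And>t. t \<in> {0..onorm A} \<Longrightarrow> 0 \<le> f t"
  shows "0 \<le> Re (cinner (fcalc f A x) x)"
proof -
  obtain ps where ps0: "\<forall>n t. t \<in> {0..onorm A} \<longrightarrow> \<bar>poly (ps n) t - f t\<bar> \<le> 1 / (real n + 1)"
    using fcalc_seq_ex[OF f] by blast
  note ps = ps0[rule_format]
  define qs where "qs n = ps n + [:1 / (real n + 1):]" for n
  have "(\<lambda>n. opoly (qs n) A x) \<longlonglongrightarrow> fcalc f A x"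
  proof (rule fcalc_lim[OF f _ inv_Suc_tendsto_mult[of 2]])
    fix n t assume t: "t \<in> {0..onorm A}"
    show "\<bar>poly (qs n) t - f t\<bar> \<le> 2 * (1 / (real n + 1))"
      using ps[OF t, of n] by (simp add: qs_def abs_le_iff)
  qed
  then have "(\<lambda>n. Re (cinner (opoly (qs n) A x) x)) \<longlonglongrightarrow> Re (cinner (fcalc f A x) x)"
    by (intro tendsto_Re tendsto_cinner_left)
  moreover have "0 \<le> Re (cinner (opoly (qs n) A x) x)" for n
  proof (rule opoly_pos[OF P order_refl])
    show "0 \<le> onorm A" using P cbounded_onorm_nonneg unfolding posop_def by blast
    fix t assume "0 \<le> t" "t \<le> onorm A"
    then have "\<bar>poly (ps n) t - f t\<bar> \<le> 1 / (real n + 1)" "0 \<le> f t" using ps nn by auto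
    then show "0 \<le> poly (qs n) t" by (simp add: qs_def abs_le_iff)
  qed
  ultimately show ?thesis by (intro LIMSEQ_le_const) auto
qed

lemma fcalc_sa:
  assumes f: "continuous_on {0..onorm A} f"
  shows "sa (fcalc f A)"
  unfolding sa_def
proof (intro allI)
  fix x y
  have A: "cbounded A" and saA: "sa A" using P by (auto simp: posop_def)
  obtain ps where l0: "\<forall>x. (\<lambda>n. opoly (ps n) A x) \<longlonglongrightarrow> fcalc f A x" using fcalc_seq_ex[OF f] by blast
  then have l1: "(\<lambda>n. cinner (opoly (ps n) A x) y) \<longlonglongrightarrow> cinner (fcalc f A x) y"
    and l2: "(\<lambda>n. cinner x (opoly (ps n) A y)) \<longlonglongrightarrow> cinner x (fcalc f A y)"
    by (auto intro: tendsto_cinner_left tendsto_cinner_right)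
  have "cinner (opoly (ps n) A x) y = cinner x (opoly (ps n) A y)" for n
    using opoly_sa[OF A saA] by (simp add: sa_def)
  then show "cinner (fcalc f A x) y = cinner x (fcalc f A y)"
    using l1 l2 LIMSEQ_unique by fastforce
qed

lemma fcalc_posop:
  assumes f: "continuous_on {0..onorm A} f" and nn: "\<And>t. t \<in> {0..onorm A} \<Longrightarrow> 0 \<le> f t"
  shows "posop (fcalc f A)"
  unfolding posop_def using fcalc_cb[OF f] fcalc_sa[OF f] fcalc_pos[OF f nn] by blast

lemma fcalc_norm:
  assumes f: "continuous_on {0..onorm A} f" and bd: "\<And>t. t \<in> {0..onorm A} \<Longrightarrow> \<bar>f t\<bar> \<le> M"
  shows "norm (fcalc f A x) \<le> M * norm x"
proof -
  obtain ps where ps0: "\<forall>n t. t \<in> {0..onorm A} \<longrightarrow> \<bar>poly (ps n) t - f t\<bar> \<le> 1 / (real n + 1)"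
    and l0: "\<forall>x. (\<lambda>n. opoly (ps n) A x) \<longlonglongrightarrow> fcalc f A x" using fcalc_seq_ex[OF f] by blast
  note ps = ps0[rule_format] and l = l0[rule_format]
  have c0: "0 \<le> onorm A" using P cbounded_onorm_nonneg unfolding posop_def by blast
  have "norm (opoly (ps n) A x) \<le> (M + 1 / (real n + 1)) * norm x" for n
  proof (rule opoly_norm_bound[OF P order_refl c0])
    fix t assume "0 \<le> t" "t \<le> onorm A"
    then have "\<bar>poly (ps n) t - f t\<bar> \<le> 1 / (real n + 1)" "\<bar>f t\<bar> \<le> M" using ps bd by auto
    then show "\<bar>poly (ps n) t\<bar> \<le> M + 1 / (real n + 1)" by linarith
  qed
  moreover have "(\<lambda>n. (M + 1 / (real n + 1)) * norm x) \<longlonglongrightarrow> M * norm x"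
    using tendsto_mult[OF tendsto_add[OF tendsto_const inv_Suc_tendsto] tendsto_const, of M "norm x"] by simp
  ultimately show ?thesis
    using tendsto_le[OF sequentially_bot _ tendsto_norm[OF l[of x]]] by (meson always_eventually)
qed

lemma fcalc_mult:
  assumes f: "continuous_on {0..onorm A} f" and g: "continuous_on {0..onorm A} g"
  shows "fcalc (\<lambda>t. f t * g t) A x = fcalc f A (fcalc g A x)"
proof -
  have A: "cbounded A" using P by (simp add: posop_def)
  have c0: "0 \<le> onorm A" using P cbounded_onorm_nonneg unfolding posop_def by blast
  obtain ps where ps0: "\<forall>n t. t \<in> {0..onorm A} \<longrightarrow> \<bar>poly (ps n) t - f t\<bar> \<le> 1 / (real n + 1)"
    and l10: "\<forall>x. (\<lambda>n. opoly (ps n) A x) \<longlonglongrightarrow> fcalc f A x" using fcalc_seq_ex[OF f] by blast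
  note ps = ps0[rule_format] and l1 = l10[rule_format]
  obtain qs where qs0: "\<forall>n t. t \<in> {0..onorm A} \<longrightarrow> \<bar>poly (qs n) t - g t\<bar> \<le> 1 / (real n + 1)"
    and l20: "\<forall>x. (\<lambda>n. opoly (qs n) A x) \<longlonglongrightarrow> fcalc g A x" using fcalc_seq_ex[OF g] by blast
  note qs = qs0[rule_format] and l2 = l20[rule_format]
  obtain Mf where Mf0: "\<forall>t\<in>{0..onorm A}. \<bar>f t\<bar> \<le> Mf" using cont_bound[OF f] by blast
  note Mf = Mf0[rule_format]
  obtain Mg where Mg0: "\<forall>t\<in>{0..onorm A}. \<bar>g t\<bar> \<le> Mg" using cont_bound[OF g] by blast
  note Mg = Mg0[rule_format]
  have h: "continuous_on {0..onorm A} (\<lambda>t. f t * g t)" using f g by (intro continuous_intros)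
  have psb: "\<bar>poly (ps n) t\<bar> \<le> Mf + 1" if "t \<in> {0..onorm A}" for n t
  proof -
    have "1 / (real n + 1) \<le> 1" by (simp add: divide_le_eq)
    then show ?thesis using ps[OF that, of n] Mf[OF that] by linarith
  qed
  have l: "(\<lambda>n. opoly (ps n * qs n) A x) \<longlonglongrightarrow> fcalc (\<lambda>t. f t * g t) A x"
  proof (rule fcalc_lim[OF h _ inv_Suc_tendsto_mult[of "Mf + 1 + Mg"]])
    fix n t assume t: "t \<in> {0..onorm A}"
    have "\<bar>poly (ps n * qs n) t - f t * g t\<bar>
        = \<bar>poly (ps n) t * (poly (qs n) t - g t) + g t * (poly (ps n) t - f t)\<bar>" by (simp add: algebra_simps)
    also have "\<dots> \<le> \<bar>poly (ps n) t\<bar> * \<bar>poly (qs n) t - g t\<bar> + \<bar>g t\<bar> * \<bar>poly (ps n) t - f t\<bar>"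
      using abs_triangle_ineq[of "poly (ps n) t * (poly (qs n) t - g t)" "g t * (poly (ps n) t - f t)"] by (simp add: abs_mult)
    also have "\<dots> \<le> (Mf + 1) * (1 / (real n + 1)) + Mg * (1 / (real n + 1))"
      using psb[OF t, of n] qs[OF t, of n] Mg[OF t] ps[OF t, of n]
      by (intro add_mono mult_mono) auto
    also have "\<dots> = (Mf + 1 + Mg) * (1 / (real n + 1))" by (rule distrib_right[symmetric])
    finally show "\<bar>poly (ps n * qs n) t - f t * g t\<bar> \<le> (Mf + 1 + Mg) * (1 / (real n + 1))" .
  qed
  have "(\<lambda>n. opoly (ps n * qs n) A x) \<longlonglongrightarrow> fcalc f A (fcalc g A x)"
  proof (rule tendsto_from_norm_bound)
    fix n
    have eq: "opoly (ps n * qs n) A x - fcalc f A (fcalc g A x)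
        = opoly (ps n) A (opoly (qs n) A x - fcalc g A x) + (opoly (ps n) A (fcalc g A x) - fcalc f A (fcalc g A x))"
      by (simp add: opoly_mult[OF A] cbounded_diff[OF opoly_cbounded[OF A]])
    have b1: "norm (opoly (ps n) A (opoly (qs n) A x - fcalc g A x)) \<le> (Mf + 1) * norm (opoly (qs n) A x - fcalc g A x)"
      by (rule opoly_norm_bound[OF P order_refl c0]) (use psb in auto)
    show "norm (opoly (ps n * qs n) A x - fcalc f A (fcalc g A x))
        \<le> (Mf + 1) * norm (opoly (qs n) A x - fcalc g A x) + norm (opoly (ps n) A (fcalc g A x) - fcalc f A (fcalc g A x))"
      unfolding eq
      using norm_triangle_ineq[of "opoly (ps n) A (opoly (qs n) A x - fcalc g A x)" "opoly (ps n) A (fcalc g A x) - fcalc f A (fcalc g A x)"] b1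
      by linarith
  next
    have "(\<lambda>n. norm (opoly (qs n) A x - fcalc g A x)) \<longlonglongrightarrow> 0"
      using tendsto_norm[OF tendsto_diff[OF l2[of x] tendsto_const, of "fcalc g A x"]] by simp
    moreover have "(\<lambda>n. norm (opoly (ps n) A (fcalc g A x) - fcalc f A (fcalc g A x))) \<longlonglongrightarrow> 0"
      using tendsto_norm[OF tendsto_diff[OF l1[of "fcalc g A x"] tendsto_const, of "fcalc f A (fcalc g A x)"]] by simp
    ultimately show "(\<lambda>n. (Mf + 1) * norm (opoly (qs n) A x - fcalc g A x)
        + norm (opoly (ps n) A (fcalc g A x) - fcalc f A (fcalc g A x))) \<longlonglongrightarrow> 0"
      by (metis (no_types) tendsto_add[OF tendsto_mult[OF tendsto_const]] add_0 mult_zero_right)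
  qed
  then show ?thesis using l LIMSEQ_unique by blast
qed

end

lemma posop_onorm_nonneg: "posop A \<Longrightarrow> 0 \<le> onorm A"
  using cbounded_onorm_nonneg unfolding posop_def by blast

lemma posop_cb: "posop A \<Longrightarrow> cbounded A"
  unfolding posop_def by blast

lemma fcalc_const:
  assumes P: "posop (A::'a::{complex_inner,complete_space} \<Rightarrow> 'a)"
  shows "fcalc (\<lambda>t. c) A x = c *\<^sub>R x"
proof -
  have "fcalc (\<lambda>t. c) A x = fcalc (poly [:c:]) A x"
    by (rule fcalc_cong[OF P]) auto
  also have "\<dots> = c *\<^sub>R x" by (simp add: fcalc_poly[OF P] opoly_const)
  finally show ?thesis .
qed

lemma fcalc_id:
  assumes P: "posop (A::'a::{complex_inner,complete_space} \<Rightarrow> 'a)"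
  shows "fcalc (\<lambda>t. t) A x = A x"
proof -
  have "fcalc (\<lambda>t. t) A x = fcalc (poly [:0,1:]) A x"
    by (rule fcalc_cong[OF P]) (auto intro: continuous_intros)
  also have "\<dots> = A x" by (simp add: fcalc_poly[OF P] opoly_X[OF posop_cb[OF P]])
  finally show ?thesis .
qed

lemma fcalc_diff:
  assumes P: "posop (A::'a::{complex_inner,complete_space} \<Rightarrow> 'a)"
    and f: "continuous_on {0..onorm A} f" and g: "continuous_on {0..onorm A} g"
  shows "fcalc (\<lambda>t. f t - g t) A x = fcalc f A x - fcalc g A x"
  using fcalc_lincomb[OF P f g, of 1 "-1" x] by simp

lemma cont_sub:
  fixes f :: "real \<Rightarrow> real"
  assumes "continuous_on {0..} f"
  shows "continuous_on {0..c} f"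
  using assms by (rule continuous_on_subset) auto

lemma cont_sqrt_comp:
  fixes f :: "real \<Rightarrow> real"
  assumes "continuous_on {0..} f"
  shows "continuous_on {0..c} (\<lambda>t. f (sqrt t))"
proof -
  have "continuous_on {0..c} sqrt" by (intro continuous_intros)
  moreover have "sqrt ` {0..c} \<subseteq> {0..}" by auto
  ultimately show ?thesis
    using continuous_on_compose2[OF assms] by blast
qed

context
  fixes A :: "'a::{complex_inner,complete_space} \<Rightarrow> 'a"
  assumes P: "posop A"
begin


lemma S_posop: "posop (fcalc sqrt A)"
  by (rule fcalc_posop[OF P]) (auto intro: continuous_intros)

lemma S_sq: "(fcalc sqrt A) ((fcalc sqrt A) x) = A x"
proof -
  have "(fcalc sqrt A) ((fcalc sqrt A) x) = fcalc (\<lambda>t. sqrt t * sqrt t) A x"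
    by (rule fcalc_mult[OF P, symmetric]) (auto intro: continuous_intros)
  also have "\<dots> = fcalc (\<lambda>t. t) A x"
    by (rule fcalc_cong[OF P]) (auto intro: continuous_intros)
  also have "\<dots> = A x" by (rule fcalc_id[OF P])
  finally show ?thesis .
qed

lemma S_onorm: "onorm A \<le> onorm (fcalc sqrt A) * onorm (fcalc sqrt A)"
proof -
  have "A = (fcalc sqrt A) \<circ> (fcalc sqrt A)" using S_sq by (auto simp: fun_eq_iff)
  then show ?thesis
    using onorm_compose[OF cbounded_bounded_linear[OF posop_cb[OF S_posop]] cbounded_bounded_linear[OF posop_cb[OF S_posop]]]
    by simp
qed

lemma S_opoly: "opoly q (fcalc sqrt A) x = fcalc (\<lambda>t. poly q (sqrt t)) A x"
proof (induction q arbitrary: x)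
  case 0
  have "fcalc (\<lambda>t. poly 0 (sqrt t)) A x = fcalc (\<lambda>t. 0) A x" by (rule fcalc_cong[OF P]) auto
  then show ?case by (simp add: fcalc_const[OF P])
next
  case (pCons a q)
  have c1: "continuous_on {0..onorm A} (\<lambda>t. poly q (sqrt t))" by (intro continuous_intros)
  have c2: "continuous_on {0..onorm A} (\<lambda>t. sqrt t * poly q (sqrt t))" by (intro continuous_intros)
  have "opoly (pCons a q) (fcalc sqrt A) x = a *\<^sub>R x + (fcalc sqrt A) (opoly q (fcalc sqrt A) x)"
    by (rule opoly_pCons[OF posop_cb[OF S_posop]])
  also have "(fcalc sqrt A) (opoly q (fcalc sqrt A) x) = fcalc (\<lambda>t. sqrt t * poly q (sqrt t)) A x"
    unfolding pCons.IH by (rule fcalc_mult[OF P _ c1, symmetric]) (auto intro: continuous_intros)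
  also have "a *\<^sub>R x + fcalc (\<lambda>t. sqrt t * poly q (sqrt t)) A x
      = a *\<^sub>R fcalc (\<lambda>t. 1) A x + 1 *\<^sub>R fcalc (\<lambda>t. sqrt t * poly q (sqrt t)) A x"
    by (simp add: fcalc_const[OF P])
  also have "\<dots> = fcalc (\<lambda>t. a * 1 + 1 * (sqrt t * poly q (sqrt t))) A x"
    by (rule fcalc_lincomb[OF P _ c2, symmetric]) (auto intro: continuous_intros)
  also have "\<dots> = fcalc (\<lambda>t. poly (pCons a q) (sqrt t)) A x"
    by (rule fcalc_cong[OF P]) (use continuous_on_add[OF continuous_on_const c2, of a] in auto)
  finally show ?case .
qed

lemma S_comp:
  assumes f: "continuous_on {0..} f"
  shows "fcalc f (fcalc sqrt A) x = fcalc (\<lambda>t. f (sqrt t)) A x"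
proof -
  have fS: "continuous_on {0..onorm (fcalc sqrt A)} f" by (rule cont_sub[OF f])
  have fA: "continuous_on {0..onorm A} (\<lambda>t. f (sqrt t))" by (rule cont_sqrt_comp[OF f])
  obtain qs where qs: "\<And>n t. t \<in> {0..onorm (fcalc sqrt A)} \<Longrightarrow> \<bar>poly (qs n) t - f t\<bar> \<le> 1 / (real n + 1)"
    using poly_approx_seq[OF fS] by blast
  have l1: "(\<lambda>n. opoly (qs n) (fcalc sqrt A) x) \<longlonglongrightarrow> fcalc f (fcalc sqrt A) x"
    by (rule fcalc_lim[OF S_posop fS qs inv_Suc_tendsto])
  have l2: "(\<lambda>n. opoly (qs n) (fcalc sqrt A) x) \<longlonglongrightarrow> fcalc (\<lambda>t. f (sqrt t)) A x"
  proof (rule tendsto_from_norm_bound)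
    fix n
    have cq: "continuous_on {0..onorm A} (\<lambda>t. poly (qs n) (sqrt t))" by (intro continuous_intros)
    have "opoly (qs n) (fcalc sqrt A) x - fcalc (\<lambda>t. f (sqrt t)) A x
        = fcalc (\<lambda>t. poly (qs n) (sqrt t) - f (sqrt t)) A x"
      by (simp add: S_opoly fcalc_diff[OF P cq fA])
    also have "norm \<dots> \<le> (1 / (real n + 1)) * norm x"
    proof (rule fcalc_norm[OF P])
      show "continuous_on {0..onorm A} (\<lambda>t. poly (qs n) (sqrt t) - f (sqrt t))"
        using cq fA by (intro continuous_intros)
      fix t assume t: "t \<in> {0..onorm A}"
      have "sqrt t \<le> onorm (fcalc sqrt A)"
      proof -
        have "sqrt t \<le> sqrt (onorm (fcalc sqrt A) * onorm (fcalc sqrt A))" by (rule real_sqrt_le_mono) (use t S_onorm in auto)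
        also have "\<dots> = onorm (fcalc sqrt A)" using posop_onorm_nonneg[OF S_posop] by (simp add: abs_of_nonneg)
        finally show ?thesis .
      qed
      then show "\<bar>poly (qs n) (sqrt t) - f (sqrt t)\<bar> \<le> 1 / (real n + 1)" using qs t by auto
    qed
    finally show "norm (opoly (qs n) (fcalc sqrt A) x - fcalc (\<lambda>t. f (sqrt t)) A x) \<le> (1 / (real n + 1)) * norm x" .
  next
    show "(\<lambda>n. 1 / (real n + 1) * norm x) \<longlonglongrightarrow> 0"
      using inv_Suc_tendsto_mult[of "norm x"] by (simp add: mult.commute)
  qed
  show ?thesis using l1 l2 LIMSEQ_unique by blast
qed

end

lemma intertwine_poly:
  assumes X: "cbounded (X::'a::{complex_inner,complete_space} \<Rightarrow> 'a)"
  shows "adj X (opoly p (X \<circ> adj X) (X x)) = opoly p (adj X \<circ> X) ((adj X \<circ> X) x)"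
proof (induction p arbitrary: x)
  case 0 then show ?case using cbounded_zero[OF adj_cbounded[OF X]] by simp
next
  case (pCons a p)
  have aX: "cbounded (adj X)" by (rule adj_cbounded[OF X])
  have cB: "cbounded (X \<circ> adj X)" by (rule cbounded_comp'[OF X aX])
  have cA: "cbounded (adj X \<circ> X)" by (rule cbounded_comp'[OF aX X])
  have "adj X (opoly (pCons a p) (X \<circ> adj X) (X x))
      = a *\<^sub>R adj X (X x) + adj X (X (adj X (opoly p (X \<circ> adj X) (X x))))"
    by (simp add: opoly_pCons[OF cB] cbounded_add[OF aX] cbounded_scaleR[OF aX])
  also have "\<dots> = a *\<^sub>R (adj X \<circ> X) x + (adj X \<circ> X) (opoly p (adj X \<circ> X) ((adj X \<circ> X) x))"
    using pCons.IH[of x] by (simp add: comp_def)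
  also have "\<dots> = opoly (pCons a p) (adj X \<circ> X) ((adj X \<circ> X) x)"
    by (simp add: opoly_pCons[OF cA] opoly_commute[OF cA])
  finally show ?case .
qed

section \<open>Intertwining and the mixed Schwarz inequality\<close>

lemma posop_XXt:
  assumes X: "cbounded (X::'a::{complex_inner,complete_space} \<Rightarrow> 'a)"
  shows "posop (X \<circ> adj X)"
  using posop_AtA[OF adj_cbounded[OF X]] by (simp add: adj_adj[OF X])

lemma intertwine:
  assumes X: "cbounded (X::'a::{complex_inner,complete_space} \<Rightarrow> 'a)"
    and h: "continuous_on {0..} h"
  shows "adj X (fcalc h (X \<circ> adj X) (X x)) = fcalc (\<lambda>t. h t * t) (adj X \<circ> X) x"
proof -
  define A where "A = adj X \<circ> X"
  define B where "B = X \<circ> adj X"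
  have PA: "posop A" unfolding A_def by (rule posop_AtA[OF X])
  have PB: "posop B" unfolding B_def by (rule posop_XXt[OF X])
  define c where "c = max (onorm A) (onorm B)"
  have hc: "continuous_on {0..c} h" by (rule cont_sub[OF h])
  obtain ps where ps: "\<And>n t. t \<in> {0..c} \<Longrightarrow> \<bar>poly (ps n) t - h t\<bar> \<le> 1 / (real n + 1)"
    using poly_approx_seq[OF hc] by blast
  have l1: "(\<lambda>n. opoly (ps n) B (X x)) \<longlonglongrightarrow> fcalc h B (X x)"
    by (rule fcalc_lim[OF PB cont_sub[OF h] _ inv_Suc_tendsto]) (use ps in \<open>auto simp: c_def\<close>)
  have l2: "(\<lambda>n. opoly (ps n) A (A x)) \<longlonglongrightarrow> fcalc h A (A x)"
    by (rule fcalc_lim[OF PA cont_sub[OF h] _ inv_Suc_tendsto]) (use ps in \<open>auto simp: c_def\<close>)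
  have "(\<lambda>n. adj X (opoly (ps n) B (X x))) \<longlonglongrightarrow> adj X (fcalc h B (X x))"
    by (rule tendsto_cbounded[OF adj_cbounded[OF X] l1])
  moreover have "adj X (opoly (ps n) B (X x)) = opoly (ps n) A (A x)" for n
    unfolding A_def B_def by (rule intertwine_poly[OF X])
  ultimately have "adj X (fcalc h B (X x)) = fcalc h A (A x)"
    using l2 LIMSEQ_unique by auto
  also have "fcalc h A (A x) = fcalc h A (fcalc (\<lambda>t. t) A x)" by (simp add: fcalc_id[OF PA])
  also have "\<dots> = fcalc (\<lambda>t. h t * t) A x"
    by (rule fcalc_mult[OF PA, symmetric]) (auto intro: continuous_intros cont_sub[OF h])
  finally show ?thesis unfolding A_def B_def .
qed

lemma eps_le:
  fixes P R K :: real
  assumes "\<And>e. 0 < e \<Longrightarrow> P \<le> R + e * K" "0 \<le> K"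
  shows "P \<le> R"
proof (rule field_le_epsilon)
  fix e :: real assume e: "0 < e"
  have "P \<le> R + (e / (K + 1)) * K" using assms(1)[of "e / (K + 1)"] e assms(2) by simp
  also have "(e / (K + 1)) * K \<le> e"
    using e assms(2) by (simp add: field_simps)
  finally show "P \<le> R + e" by simp
qed

lemma mixed_schwarz_gen:
  fixes X :: "'a::{complex_inner,complete_space} \<Rightarrow> 'a" and a b :: "real \<Rightarrow> real"
  assumes X: "cbounded X"
    and a: "continuous_on {0..} a" and b: "continuous_on {0..} b"
    and a0: "\<And>t. 0 \<le> t \<Longrightarrow> 0 \<le> a t" and b0: "\<And>t. 0 \<le> t \<Longrightarrow> 0 \<le> b t"
    and ab: "\<And>t. 0 \<le> t \<Longrightarrow> a t * b t = t"
  shows "(cmod (cinner (X x) y))^2 \<le> Re (cinner (fcalc a (adj X \<circ> X) x) x) * Re (cinner (fcalc b (X \<circ> adj X) y) y)"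
proof -
  define A where "A = adj X \<circ> X"
  define B where "B = X \<circ> adj X"
  have PA: "posop A" unfolding A_def by (rule posop_AtA[OF X])
  have PB: "posop B" unfolding B_def by (rule posop_XXt[OF X])
  have aA: "continuous_on {0..onorm A} a" by (rule cont_sub[OF a])
  have bB: "continuous_on {0..onorm B} b" by (rule cont_sub[OF b])
  have Qa: "0 \<le> Re (cinner (fcalc a A x) x)" by (rule fcalc_pos[OF PA aA]) (auto intro: a0)
  have main: "(cmod (cinner (X x) y))^2 \<le> Re (cinner (fcalc a A x) x) * Re (cinner (fcalc b B y) y) + e * (Re (cinner (fcalc a A x) x) * (norm y)^2)"
    if e: "0 < e" for e
  proof -
    define k where "k t = 1 / (b t + e)" for t
    have k_pos: "0 < b t + e" if "0 \<le> t" for t using b0[OF that] e by simp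
    have kc: "continuous_on {0..} k"
      unfolding k_def using b k_pos by (intro continuous_intros) (auto simp: less_imp_neq[symmetric])
    have kB: "continuous_on {0..onorm B} k" by (rule cont_sub[OF kc])
    have mc: "continuous_on {0..onorm B} (\<lambda>t. b t + e)" using bB by (intro continuous_intros)
    define K where "K = fcalc k B"
    define M where "M = fcalc (\<lambda>t. b t + e) B"
    have PK: "posop K" unfolding K_def
    proof (rule fcalc_posop[OF PB kB])
      fix t assume "t \<in> {0..onorm B}"
      then show "0 \<le> k t" using k_pos[of t] by (simp add: k_def)
    qed
    have KM: "K (M y) = y"
    proof -
      have "K (M y) = fcalc (\<lambda>t. k t * (b t + e)) B y"
        unfolding K_def M_def by (rule fcalc_mult[OF PB kB mc, symmetric])
      also have "\<dots> = fcalc (\<lambda>t. 1) B y"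
      proof (rule fcalc_cong[OF PB continuous_on_mult[OF kB mc]])
        fix t assume "t \<in> {0..onorm B}"
        then show "k t * (b t + e) = 1" using k_pos[of t] by (simp add: k_def)
      qed
      also have "\<dots> = y" by (simp add: fcalc_const[OF PB])
      finally show ?thesis .
    qed
    have My: "M y = fcalc b B y + e *\<^sub>R y"
      unfolding M_def using fcalc_lincomb[OF PB bB continuous_on_const[where c=1], where a=1 and b=e and x=y] fcalc_const[OF PB, where c=1 and x=y]
      by simp
    have saK: "cinner (K u) v = cinner u (K v)" for u v using PK by (simp add: posop_def sa_def)
    have "cinner (X x) y = cinner (K (X x)) (M y)"
      by (simp add: saK KM)
    then have "(cmod (cinner (X x) y))^2 \<le> Re (cinner (K (X x)) (X x)) * Re (cinner (K (M y)) (M y))"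
      using posop_cs[OF PK, of "X x" "M y"] by simp
    also have "Re (cinner (K (M y)) (M y)) = Re (cinner (fcalc b B y) y) + e * (norm y)^2"
    proof -
      have "Re (cinner (K (M y)) (M y)) = Re (cinner (M y) y)"
        unfolding KM by (metis Re_complex_div_eq_0 cinner_cnj complex_cnj_cnj cnj.sel(1))
      also have "\<dots> = Re (cinner (fcalc b B y) y) + e * (norm y)^2"
        by (simp add: My cinner_add_left cinner_scaleR_left Re_cinner_self)
      finally show ?thesis .
    qed
    also have "Re (cinner (K (X x)) (X x)) = Re (cinner (fcalc (\<lambda>t. k t * t) A x) x)"
    proof -
      have "cinner (K (X x)) (X x) = cinner (adj X (K (X x))) x"
        by (simp add: adj_prop2[OF X])
      also have "adj X (K (X x)) = fcalc (\<lambda>t. k t * t) A x"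
        unfolding K_def A_def B_def by (rule intertwine[OF X kc])
      finally show ?thesis by simp
    qed
    also have "Re (cinner (fcalc (\<lambda>t. k t * t) A x) x) \<le> Re (cinner (fcalc a A x) x)"
    proof -
      have kt: "continuous_on {0..onorm A} (\<lambda>t. k t * t)"
        using cont_sub[OF kc, of "onorm A"] by (intro continuous_intros) auto
      have "0 \<le> Re (cinner (fcalc (\<lambda>t. a t - k t * t) A x) x)"
      proof (rule fcalc_pos[OF PA])
        show "continuous_on {0..onorm A} (\<lambda>t. a t - k t * t)" by (rule continuous_on_diff[OF aA kt])
        fix t assume "t \<in> {0..onorm A}"
        then have t: "0 \<le> t" by simp
        show "0 \<le> a t - k t * t"
        proof (cases "b t = 0")
          case True
          then have "t = 0" using ab[OF t] by simp
          then show ?thesis using a0 by simp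
        next
          case False
          then have bp: "0 < b t" using b0[OF t] by simp
          have "k t * t = t / (b t + e)" by (simp add: k_def)
          also have "\<dots> \<le> t / b t" using bp e t by (intro divide_left_mono) auto
          also have "\<dots> = a t" using ab[OF t] bp by (simp add: field_simps)
          finally show ?thesis by simp
        qed
      qed
      also have "fcalc (\<lambda>t. a t - k t * t) A x = fcalc a A x - fcalc (\<lambda>t. k t * t) A x"
        by (rule fcalc_diff[OF PA aA kt])
      finally show ?thesis by (simp add: cinner_diff_left)
    qed
    then have "Re (cinner (fcalc (\<lambda>t. k t * t) A x) x) * (Re (cinner (fcalc b B y) y) + e * (norm y)^2)
        \<le> Re (cinner (fcalc a A x) x) * (Re (cinner (fcalc b B y) y) + e * (norm y)^2)"
    proof (rule mult_right_mono)
      have "0 \<le> Re (cinner (fcalc b B y) y)" by (rule fcalc_pos[OF PB bB]) (auto intro: b0)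
      then show "0 \<le> Re (cinner (fcalc b B y) y) + e * (norm y)^2" using e by simp
    qed
    finally show ?thesis by (simp add: algebra_simps)
  qed
  have "(cmod (cinner (X x) y))^2 \<le> Re (cinner (fcalc a A x) x) * Re (cinner (fcalc b B y) y)"
  proof (rule eps_le)
    show "\<And>e. 0 < e \<Longrightarrow> (cmod (cinner (X x) y))^2 \<le> Re (cinner (fcalc a A x) x) * Re (cinner (fcalc b B y) y) + e * (Re (cinner (fcalc a A x) x) * (norm y)^2)"
      by (rule main)
    show "0 \<le> Re (cinner (fcalc a A x) x) * (norm y)^2" by (intro mult_nonneg_nonneg Qa zero_le_power2)
  qed
  then show ?thesis unfolding A_def B_def .
qed

section \<open>Jensen-type inequality\<close>

lemma powr_tangent:
  fixes r u s :: real
  assumes r: "1 \<le> r" and u: "0 < u" and s: "0 \<le> s"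
  shows "u powr r + r * u powr (r - 1) * (s - u) \<le> s powr r"
proof (cases "s = 0")
  case True
  have "u powr (r - 1) * u = u powr r"
    using u by (metis powr_add diff_add_cancel powr_one less_imp_le)
  then have "u powr r + r * u powr (r - 1) * (s - u) = u powr r * (1 - r)"
    using True by (simp add: algebra_simps)
  also have "\<dots> \<le> 0" using r by (simp add: mult_nonneg_nonpos)
  finally show ?thesis using True by simp
next
  case False
  then have s0: "0 < s" using s by simp
  have d: "((\<lambda>z. z powr r) has_field_derivative r * u powr (r - 1)) (at u within {0<..})"
    using has_real_derivative_powr[OF u] by (rule has_field_derivative_at_within)
  have "r * u powr (r - 1) * (s - u) \<le> s powr r - u powr r"
    by (rule convex_on_imp_above_tangent[OF powr_convex[OF r] convex_connected[OF convex_real_interval(3)] _ _ d])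
       (use u s0 in \<open>auto simp: interior_open\<close>)
  then show ?thesis by simp
qed

lemma powr_2r: "((t::real) * t) powr r = t powr (2 * r)"
proof -
  have "(t * t) powr r = t powr r * t powr r" by (rule powr_mult)
  also have "\<dots> = t powr (r + r)" by (rule powr_add[symmetric])
  also have "r + r = 2 * r" by simp
  finally show ?thesis .
qed

lemma jensen:
  fixes F :: "'a::{complex_inner,complete_space} \<Rightarrow> 'a"
  assumes PF: "posop F" and r: "1 \<le> r" and x: "norm x = 1"
  shows "norm (F x) powr (2 * r) \<le> Re (cinner (fcalc (\<lambda>t. t powr (2 * r)) F x) x)"
proof -
  define c where "c = onorm F"
  have cp: "continuous_on {0..onorm F} (\<lambda>t. t powr (2 * r))"
    using r by (intro continuous_on_powr' continuous_intros) auto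
  have pos: "0 \<le> Re (cinner (fcalc (\<lambda>t. t powr (2 * r)) F x) x)"
    by (rule fcalc_pos[OF PF cp]) simp
  show ?thesis
  proof (cases "norm (F x) = 0")
    case True
    then show ?thesis using pos by simp
  next
    case False
    define w where "w = norm (F x)"
    define u where "u = w * w"
    have w0: "0 < w" using False by (simp add: w_def)
    have u0: "0 < u" using w0 by (simp add: u_def)
    define \<alpha> where "\<alpha> = u powr r - r * u powr (r - 1) * u"
    define \<beta> where "\<beta> = r * u powr (r - 1)"
    have cid: "continuous_on {0..onorm F} (\<lambda>t. t)" by (rule continuous_on_id)
    have csq: "continuous_on {0..onorm F} (\<lambda>t. t * t)" by (intro continuous_intros)
    have ck: "continuous_on {0..onorm F} (\<lambda>t. \<alpha> * 1 + \<beta> * (t * t))" by (intro continuous_intros)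
    have FF: "fcalc (\<lambda>t. t * t) F x = F (F x)"
      using fcalc_mult[OF PF cid cid, of x] by (simp add: fcalc_id[OF PF])
    have saF: "sa F" using PF by (simp add: posop_def)
    have "cinner (F (F x)) x = cinner (F x) (F x)" using saF unfolding sa_def by blast
    then have ReFF: "Re (cinner (F (F x)) x) = u"
      by (simp add: Re_cinner_self u_def w_def power2_eq_square)
    have hk: "fcalc (\<lambda>t. \<alpha> * 1 + \<beta> * (t * t)) F x = \<alpha> *\<^sub>R x + \<beta> *\<^sub>R F (F x)"
      using fcalc_lincomb[OF PF continuous_on_const[where c=1] csq, where a=\<alpha> and b=\<beta> and x=x]
        fcalc_const[OF PF, where c=1 and x=x] FF by simp
    have "0 \<le> Re (cinner (fcalc (\<lambda>t. t powr (2 * r) - (\<alpha> * 1 + \<beta> * (t * t))) F x) x)"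
    proof (rule fcalc_pos[OF PF])
      show "continuous_on {0..onorm F} (\<lambda>t. t powr (2 * r) - (\<alpha> * 1 + \<beta> * (t * t)))"
        by (rule continuous_on_diff[OF cp ck])
      fix t assume "t \<in> {0..onorm F}"
      then have t: "0 \<le> t" by simp
      have "u powr r + r * u powr (r - 1) * (t * t - u) \<le> (t * t) powr r"
        by (rule powr_tangent[OF r u0]) (use t in simp)
      then show "0 \<le> t powr (2 * r) - (\<alpha> * 1 + \<beta> * (t * t))"
        using powr_2r[of t r] by (simp add: \<alpha>_def \<beta>_def algebra_simps)
    qed
    also have "fcalc (\<lambda>t. t powr (2 * r) - (\<alpha> * 1 + \<beta> * (t * t))) F x
        = fcalc (\<lambda>t. t powr (2 * r)) F x - (\<alpha> *\<^sub>R x + \<beta> *\<^sub>R F (F x))"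
      using fcalc_diff[OF PF cp ck, of x] hk by simp
    finally have "0 \<le> Re (cinner (fcalc (\<lambda>t. t powr (2 * r)) F x) x) - (\<alpha> + \<beta> * u)"
      using x ReFF by (simp add: cinner_diff_left cinner_add_left cinner_scaleR_left Re_cinner_self)
    moreover have "\<alpha> + \<beta> * u = w powr (2 * r)"
      using powr_2r[of w r] w0 by (simp add: \<alpha>_def \<beta>_def u_def)
    ultimately show ?thesis by (simp add: w_def)
  qed
qed

lemma cont_sqrt_comp0:
  fixes f :: "real \<Rightarrow> real"
  assumes "continuous_on {0..} f"
  shows "continuous_on {0..} (\<lambda>t. f (sqrt t))"
proof -
  have "continuous_on {0..} sqrt" by (intro continuous_intros)
  moreover have "sqrt ` {0..} \<subseteq> {0..}" by auto
  ultimately show ?thesis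
    using continuous_on_compose2[OF assms] by blast
qed

lemma fcalc_f_oabs:
  fixes A :: "'a::{complex_inner,complete_space} \<Rightarrow> 'a" and f :: "real \<Rightarrow> real"
  assumes PA: "posop A" and f: "continuous_on {0..} f" and f0: "\<And>t. 0 \<le> t \<Longrightarrow> 0 \<le> f t"
  shows "posop (fcalc f (fcalc sqrt A))"
    and "fcalc f (fcalc sqrt A) (fcalc f (fcalc sqrt A) x) = fcalc (\<lambda>t. f (sqrt t) * f (sqrt t)) A x"
proof -
  have SP: "posop (fcalc sqrt A)" by (rule S_posop[OF PA])
  show "posop (fcalc f (fcalc sqrt A))"
    by (rule fcalc_posop[OF SP cont_sub[OF f]]) (auto intro: f0)
  have eq: "fcalc f (fcalc sqrt A) y = fcalc (\<lambda>t. f (sqrt t)) A y" for y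
    by (rule S_comp[OF PA f])
  have c: "continuous_on {0..onorm A} (\<lambda>t. f (sqrt t))" by (rule cont_sqrt_comp[OF f])
  show "fcalc f (fcalc sqrt A) (fcalc f (fcalc sqrt A) x) = fcalc (\<lambda>t. f (sqrt t) * f (sqrt t)) A x"
    unfolding eq by (rule fcalc_mult[OF PA c c, symmetric])
qed

lemma mixed2:
  fixes X :: "'a::{complex_inner,complete_space} \<Rightarrow> 'a" and f g :: "real \<Rightarrow> real"
  assumes X: "cbounded X"
    and f: "continuous_on {0..} f" and g: "continuous_on {0..} g"
    and f0: "\<And>t. t \<ge> 0 \<Longrightarrow> f t \<ge> 0" and g0: "\<And>t. t \<ge> 0 \<Longrightarrow> g t \<ge> 0"
    and fg: "\<And>t. t \<ge> 0 \<Longrightarrow> f t * g t = t"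
  shows "cmod (cinner (X x) x) \<le> norm (fcalc f (oabs X) x) * norm (fcalc g (oabs (adj X)) x)"
proof -
  define A where "A = adj X \<circ> X"
  define B where "B = X \<circ> adj X"
  have PA: "posop A" unfolding A_def by (rule posop_AtA[OF X])
  have PB: "posop B" unfolding B_def by (rule posop_XXt[OF X])
  have oA: "oabs X = fcalc sqrt A" by (simp add: oabs_def A_def)
  have oB: "oabs (adj X) = fcalc sqrt B" by (simp add: oabs_def B_def adj_adj[OF X])
  define F where "F = fcalc f (oabs X)"
  define G where "G = fcalc g (oabs (adj X))"
  have PF: "posop F" and FF: "F (F x) = fcalc (\<lambda>t. f (sqrt t) * f (sqrt t)) A x"
    unfolding F_def oA using fcalc_f_oabs[OF PA f f0] by auto
  have PG: "posop G" and GG: "G (G x) = fcalc (\<lambda>t. g (sqrt t) * g (sqrt t)) B x"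
    unfolding G_def oB using fcalc_f_oabs[OF PB g g0] by auto
  have nF: "Re (cinner (F (F x)) x) = (norm (F x))^2"
  proof -
    have "cinner (F (F x)) x = cinner (F x) (F x)" using PF unfolding posop_def sa_def by blast
    then show ?thesis by (simp add: Re_cinner_self)
  qed
  have nG: "Re (cinner (G (G x)) x) = (norm (G x))^2"
  proof -
    have "cinner (G (G x)) x = cinner (G x) (G x)" using PG unfolding posop_def sa_def by blast
    then show ?thesis by (simp add: Re_cinner_self)
  qed
  have fs: "continuous_on {0..} (\<lambda>t. f (sqrt t))" by (rule cont_sqrt_comp0[OF f])
  have gs: "continuous_on {0..} (\<lambda>t. g (sqrt t))" by (rule cont_sqrt_comp0[OF g])
  have "(cmod (cinner (X x) x))^2 \<le> Re (cinner (fcalc (\<lambda>t. f (sqrt t) * f (sqrt t)) (adj X \<circ> X) x) x)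
      * Re (cinner (fcalc (\<lambda>t. g (sqrt t) * g (sqrt t)) (X \<circ> adj X) x) x)"
  proof (rule mixed_schwarz_gen[OF X])
    show "continuous_on {0..} (\<lambda>t. f (sqrt t) * f (sqrt t))" using fs by (intro continuous_intros)
    show "continuous_on {0..} (\<lambda>t. g (sqrt t) * g (sqrt t))" using gs by (intro continuous_intros)
    fix t :: real assume t: "0 \<le> t"
    show "0 \<le> f (sqrt t) * f (sqrt t)" by simp
    show "0 \<le> g (sqrt t) * g (sqrt t)" by simp
    have "f (sqrt t) * g (sqrt t) = sqrt t" using fg[of "sqrt t"] t by simp
    then have "(f (sqrt t) * g (sqrt t)) * (f (sqrt t) * g (sqrt t)) = t" using t by simp
    then show "f (sqrt t) * f (sqrt t) * (g (sqrt t) * g (sqrt t)) = t" by (simp add: ac_simps)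
  qed
  also have "\<dots> = (norm (F x))^2 * (norm (G x))^2"
    using FF GG nF nG by (simp add: A_def B_def)
  also have "\<dots> = (norm (F x) * norm (G x))^2" by (simp add: power_mult_distrib)
  finally have "(cmod (cinner (X x) x))^2 \<le> (norm (F x) * norm (G x))^2" .
  then show ?thesis unfolding F_def G_def
    by (rule power2_le_imp_le) simp
qed

lemma amgm_powr:
  fixes a b c r :: real
  assumes a: "0 \<le> a" and b: "0 \<le> b" and c: "0 \<le> c" "c \<le> a * b" and r: "0 \<le> r"
  shows "c powr r \<le> (a powr (2 * r) + b powr (2 * r)) / 2"
proof -
  have "c powr r \<le> (a * b) powr r" by (rule powr_mono2[OF r c])
  also have "\<dots> = a powr r * b powr r" by (rule powr_mult)
  also have "\<dots> \<le> ((a powr r)^2 + (b powr r)^2) / 2"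
    using sum_squares_bound[of "a powr r" "b powr r"] by simp
  also have "(a powr r)^2 = a powr (2 * r)" using powr_2r[of a r] powr_mult[of a a r]
    by (simp add: power2_eq_square)
  also have "(b powr r)^2 = b powr (2 * r)" using powr_2r[of b r] powr_mult[of b b r]
    by (simp add: power2_eq_square)
  finally show ?thesis .
qed

lemma half_bound:
  fixes X :: "'a::{complex_inner,complete_space} \<Rightarrow> 'a" and f g :: "real \<Rightarrow> real"
  assumes X: "cbounded X"
    and f: "continuous_on {0..} f" and g: "continuous_on {0..} g"
    and f0: "\<And>t. t \<ge> 0 \<Longrightarrow> f t \<ge> 0" and g0: "\<And>t. t \<ge> 0 \<Longrightarrow> g t \<ge> 0"
    and fg: "\<And>t. t \<ge> 0 \<Longrightarrow> f t * g t = t"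
    and x: "norm x = 1" and r: "r \<ge> 1"
  shows "cmod (cinner (X x) x) powr r \<le>
     (Re (cinner (fcalc (\<lambda>t. t powr (2 * r)) (fcalc f (oabs X)) x) x)
    + Re (cinner (fcalc (\<lambda>t. t powr (2 * r)) (fcalc g (oabs (adj X))) x) x)) / 2"
proof -
  have r0: "0 \<le> r" using r by simp
  have PA: "posop (adj X \<circ> X)" by (rule posop_AtA[OF X])
  have PB: "posop (adj (adj X) \<circ> adj X)" by (rule posop_AtA[OF adj_cbounded[OF X]])
  have PF: "posop (fcalc f (oabs X))"
    unfolding oabs_def using fcalc_f_oabs(1)[OF PA f f0] .
  have PG: "posop (fcalc g (oabs (adj X)))"
    unfolding oabs_def using fcalc_f_oabs(1)[OF PB g g0] .
  have "cmod (cinner (X x) x) powr r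
      \<le> (norm (fcalc f (oabs X) x) powr (2 * r) + norm (fcalc g (oabs (adj X)) x) powr (2 * r)) / 2"
    by (rule amgm_powr[OF norm_ge_zero norm_ge_zero norm_ge_zero mixed2[OF X f g f0 g0 fg] r0])
  also have "\<dots> \<le> (Re (cinner (fcalc (\<lambda>t. t powr (2 * r)) (fcalc f (oabs X)) x) x)
    + Re (cinner (fcalc (\<lambda>t. t powr (2 * r)) (fcalc g (oabs (adj X))) x) x)) / 2"
    using jensen[OF PF r x] jensen[OF PG r x] by simp
  finally show ?thesis .
qed

theorem theorem2p5:
  fixes X Y :: "'a::{complex_inner, complete_space} \<Rightarrow> 'a"
    and f g :: "real \<Rightarrow> real" and x :: 'a and r s :: real
  assumes "cbounded X" and "cbounded Y"
    and "continuous_on {0..} f" and "continuous_on {0..} g"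
    and "\<And>t. t \<ge> 0 \<Longrightarrow> f t \<ge> 0" and "\<And>t. t \<ge> 0 \<Longrightarrow> g t \<ge> 0"
    and "\<And>t. t \<ge> 0 \<Longrightarrow> f t * g t = t"
    and "norm x = 1" and "r \<ge> 1" and "s \<ge> 1"
  shows "cmod (cinner (X x) x) powr r + cmod (cinner (Y x) x) powr s
    \<le> 1/2 * onorm (\<lambda>z.
          fcalc (\<lambda>t. t powr (2 * r)) (fcalc f (oabs X)) z
        + fcalc (\<lambda>t. t powr (2 * r)) (fcalc g (oabs (adj X))) z
        + fcalc (\<lambda>t. t powr (2 * s)) (fcalc f (oabs Y)) z
        + fcalc (\<lambda>t. t powr (2 * s)) (fcalc g (oabs (adj Y))) z)"
proof -
  note X = assms(1) and Y = assms(2) and f = assms(3) and g = assms(4)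
    and f0 = assms(5) and g0 = assms(6) and fg = assms(7) and x = assms(8) and r = assms(9) and s = assms(10)
  define P1 where "P1 = fcalc (\<lambda>t. t powr (2 * r)) (fcalc f (oabs X))"
  define P2 where "P2 = fcalc (\<lambda>t. t powr (2 * r)) (fcalc g (oabs (adj X)))"
  define P3 where "P3 = fcalc (\<lambda>t. t powr (2 * s)) (fcalc f (oabs Y))"
  define P4 where "P4 = fcalc (\<lambda>t. t powr (2 * s)) (fcalc g (oabs (adj Y)))"
  have cbP: "cbounded (fcalc (\<lambda>t. t powr (2 * q)) F)" if "posop F" "1 \<le> q" for F :: "'a \<Rightarrow> 'a" and q
  proof (rule fcalc_cb[OF that(1)])
    show "continuous_on {0..onorm F} (\<lambda>t. t powr (2 * q))"
      using that(2) by (intro continuous_on_powr' continuous_intros) auto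
  qed
  have PFX: "posop (fcalc f (oabs X))" unfolding oabs_def by (rule fcalc_f_oabs(1)[OF posop_AtA[OF X] f f0])
  have PGX: "posop (fcalc g (oabs (adj X)))" unfolding oabs_def by (rule fcalc_f_oabs(1)[OF posop_AtA[OF adj_cbounded[OF X]] g g0])
  have PFY: "posop (fcalc f (oabs Y))" unfolding oabs_def by (rule fcalc_f_oabs(1)[OF posop_AtA[OF Y] f f0])
  have PGY: "posop (fcalc g (oabs (adj Y)))" unfolding oabs_def by (rule fcalc_f_oabs(1)[OF posop_AtA[OF adj_cbounded[OF Y]] g g0])
  have c1: "cbounded P1" unfolding P1_def by (rule cbP[OF PFX r])
  have c2: "cbounded P2" unfolding P2_def by (rule cbP[OF PGX r])
  have c3: "cbounded P3" unfolding P3_def by (rule cbP[OF PFY s])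
  have c4: "cbounded P4" unfolding P4_def by (rule cbP[OF PGY s])
  define T where "T = (\<lambda>z. P1 z + P2 z + P3 z + P4 z)"
  have cT: "cbounded T" unfolding T_def
    by (intro cbounded_plus c1 c2 c3 c4)
  have hX: "cmod (cinner (X x) x) powr r \<le> (Re (cinner (P1 x) x) + Re (cinner (P2 x) x)) / 2"
    unfolding P1_def P2_def by (rule half_bound[OF X f g f0 g0 fg x r])
  have hY: "cmod (cinner (Y x) x) powr s \<le> (Re (cinner (P3 x) x) + Re (cinner (P4 x) x)) / 2"
    unfolding P3_def P4_def by (rule half_bound[OF Y f g f0 g0 fg x s])
  have "Re (cinner (P1 x) x) + Re (cinner (P2 x) x) + Re (cinner (P3 x) x) + Re (cinner (P4 x) x)
      = Re (cinner (T x) x)" by (simp add: T_def cinner_add_left)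
  also have "\<dots> \<le> cmod (cinner (T x) x)" by (rule complex_Re_le_cmod)
  also have "\<dots> \<le> norm (T x) * norm x" by (rule cauchy_schwarz)
  also have "\<dots> \<le> onorm T * norm x * norm x"
    by (rule mult_right_mono[OF cbounded_onorm[OF cT]]) simp
  also have "\<dots> = onorm T" using x by simp
  finally have "Re (cinner (P1 x) x) + Re (cinner (P2 x) x) + Re (cinner (P3 x) x) + Re (cinner (P4 x) x) \<le> onorm T" .
  then have "(Re (cinner (P1 x) x) + Re (cinner (P2 x) x)) / 2 + (Re (cinner (P3 x) x) + Re (cinner (P4 x) x)) / 2 \<le> onorm T / 2"
    by (simp add: add_divide_distrib[symmetric] divide_right_mono)
  then have "cmod (cinner (X x) x) powr r + cmod (cinner (Y x) x) powr s \<le> onorm T / 2"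
    using add_mono[OF hX hY] by linarith
  then have "cmod (cinner (X x) x) powr r + cmod (cinner (Y x) x) powr s \<le> 1/2 * onorm T"
    by simp
  then show ?thesis by (simp add: T_def P1_def P2_def P3_def P4_def)
qed

end
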